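(* If $f\colon X\to Y$ is an asymptotically Lipschitz function of metric spaces, then $\operatorname{asdim}_{AN}(X)\le \operatorname{asdim}_{AN}(f)+\operatorname{asdim}_{AN}(Y)$.
   Context: $f$ is asymptotically Lipschitz if there are constants $a,b\ge0$ with $d_Y(f(x),f(y))\le a\,d_X(x,y)+b$ for all $x,y$. For a metric space $X$, an $n$-dimensional control function is $D_X\colon\mathbb R_+\to\mathbb R_+$ such that for each $r>0$ there are families $\mathcal U_1,\dots,\mathcal U_{n+1}$ of subsets of $X$, each $r$-disjoint (points in different members at distance $\ge r$), with members of diameter $\le D_X(r)$, whose union covers $X$. $\operatorname{asdim}_{AN}(X)\le n$ iff $X$ has an $n$-dimensional control function of the form $D_X(r)=cr+b$ with $b,c\ge0$. For $r>0$, the $r$-components of $A\subset X$ are the classes of points of $A$ joined by finite sequences in $A$ with consecutive distances $\le r$. An $m$-dimensional control function of $f$ is $D_f\colon\mathbb R_+\times\mathbb R_+\to\mathbb R_+$ such that for all $r_X,R_Y>0$ every $A\subset X$ with $\operatorname{diam} f(A)\le R_Y$ is a union of $m+1$ sets whose $r_X$-components have diameter $\le D_f(r_X,R_Y)$. $\operatorname{asdim}_{AN}(f)$ is the minimal $m$ for which $f$ has an $m$-dimensional control function of the form $D_f(r_X,R_Y)=a r_X+bR_Y+c$ (constants $a,b,c$). *)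

theory Defs
  imports "HOL-Analysis.Analysis" "HOL-Library.Extended_Nat"
begin

definition asymp_lipschitz :: "'a metric \<Rightarrow> 'b metric \<Rightarrow> ('a \<Rightarrow> 'b) \<Rightarrow> bool" where
  "asymp_lipschitz X Y f \<longleftrightarrow> f ` mspace X \<subseteq> mspace Y \<and>
     (\<exists>a b::real. a \<ge> 0 \<and> b \<ge> 0 \<and>
        (\<forall>x\<in>mspace X. \<forall>y\<in>mspace X. mdist Y (f x) (f y) \<le> a * mdist X x y + b))"

definition diam_le :: "'a metric \<Rightarrow> 'a set \<Rightarrow> real \<Rightarrow> bool" where
  "diam_le X A D \<longleftrightarrow> (\<forall>x\<in>A. \<forall>y\<in>A. mdist X x y \<le> D)"

definition r_disjoint :: "'a metric \<Rightarrow> real \<Rightarrow> 'a set set \<Rightarrow> bool" where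
  "r_disjoint X r U \<longleftrightarrow>
     (\<forall>A\<in>U. \<forall>B\<in>U. A \<noteq> B \<longrightarrow> (\<forall>x\<in>A. \<forall>y\<in>B. mdist X x y \<ge> r))"

(* n-dimensional control function of X: families U 0, ..., U n (n+1 families) *)
definition control_fun :: "'a metric \<Rightarrow> nat \<Rightarrow> (real \<Rightarrow> real) \<Rightarrow> bool" where
  "control_fun X n D \<longleftrightarrow> (\<forall>r>0. \<exists>U::nat \<Rightarrow> 'a set set.
      (\<forall>i\<le>n. r_disjoint X r (U i) \<and> (\<forall>A\<in>U i. A \<subseteq> mspace X \<and> diam_le X A (D r))) \<and>
      mspace X \<subseteq> (\<Union>i\<le>n. \<Union>(U i)))"

definition asdimAN_le :: "'a metric \<Rightarrow> nat \<Rightarrow> bool" where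
  "asdimAN_le X n \<longleftrightarrow> (\<exists>b c::real. b \<ge> 0 \<and> c \<ge> 0 \<and> control_fun X n (\<lambda>r. c * r + b))"

definition asdimAN :: "'a metric \<Rightarrow> enat" where
  "asdimAN X = Inf {enat n | n. asdimAN_le X n}"

(* x and y lie in the same r-component of A *)
definition r_chain :: "'a metric \<Rightarrow> real \<Rightarrow> 'a set \<Rightarrow> 'a \<Rightarrow> 'a \<Rightarrow> bool" where
  "r_chain X r A x y \<longleftrightarrow> x \<in> A \<and> (\<lambda>u v. u \<in> A \<and> v \<in> A \<and> mdist X u v \<le> r)\<^sup>*\<^sup>* x y"

definition components_diam_le :: "'a metric \<Rightarrow> real \<Rightarrow> 'a set \<Rightarrow> real \<Rightarrow> bool" where
  "components_diam_le X r A D \<longleftrightarrow> (\<forall>x\<in>A. \<forall>y\<in>A. r_chain X r A x y \<longrightarrow> mdist X x y \<le> D)"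

definition fun_control_fun ::
  "'a metric \<Rightarrow> 'b metric \<Rightarrow> ('a \<Rightarrow> 'b) \<Rightarrow> nat \<Rightarrow> (real \<Rightarrow> real \<Rightarrow> real) \<Rightarrow> bool" where
  "fun_control_fun X Y f m D \<longleftrightarrow> (\<forall>rX>0. \<forall>RY>0. \<forall>A. A \<subseteq> mspace X \<longrightarrow>
      diam_le Y (f ` A) RY \<longrightarrow>
      (\<exists>B::nat \<Rightarrow> 'a set. A = (\<Union>i\<le>m. B i) \<and>
          (\<forall>i\<le>m. components_diam_le X rX (B i) (D rX RY))))"

definition fun_asdimAN_le :: "'a metric \<Rightarrow> 'b metric \<Rightarrow> ('a \<Rightarrow> 'b) \<Rightarrow> nat \<Rightarrow> bool" where
  "fun_asdimAN_le X Y f m \<longleftrightarrow> (\<exists>a b c::real. a \<ge> 0 \<and> b \<ge> 0 \<and> c \<ge> 0 \<and>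
      fun_control_fun X Y f m (\<lambda>r R. a * r + b * R + c))"

definition fun_asdimAN :: "'a metric \<Rightarrow> 'b metric \<Rightarrow> ('a \<Rightarrow> 'b) \<Rightarrow> enat" where
  "fun_asdimAN X Y f = Inf {enat m | m. fun_asdimAN_le X Y f m}"

end

theory Submission
  imports Defs
begin

definition clp :: "real \<Rightarrow> real" where "clp t = min 1 (max 0 t)"

lemma clp_ge0: "0 \<le> clp t" and clp_le1: "clp t \<le> 1"
  by (auto simp: clp_def)

lemma clp_lip: "\<bar>clp s - clp t\<bar> \<le> \<bar>s - t\<bar>"
  by (simp add: clp_def min_def max_def abs_if split: if_splits)

lemma clp_pos: "0 < clp t \<Longrightarrow> 0 < t"
  by (simp add: clp_def min_def max_def split: if_splits)

lemma clp_lt1: "clp t < 1 \<Longrightarrow> t < 1"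
  by (simp add: clp_def min_def max_def split: if_splits)

lemma clp_one: "1 \<le> t \<Longrightarrow> clp t = 1"
  by (simp add: clp_def)

lemma clp_div_lip:
  assumes "\<bar>u - u'\<bar> \<le> e" "(d::real) > 0"
  shows "\<bar>clp ((u - t)/d) - clp ((u' - t)/d)\<bar> \<le> e / d"
proof -
  have "\<bar>clp ((u - t)/d) - clp ((u' - t)/d)\<bar> \<le> \<bar>(u - t)/d - (u' - t)/d\<bar>"
    by (rule clp_lip)
  also have "\<dots> = \<bar>u - u'\<bar> / d" using assms(2)
    by (simp add: diff_divide_distrib[symmetric] abs_divide)
  also have "\<dots> \<le> e / d" using assms by (simp add: divide_right_mono)
  finally show ?thesis .
qed

definition incr :: "(nat \<Rightarrow> 'a \<Rightarrow> real) \<Rightarrow> nat \<Rightarrow> 'a \<Rightarrow> real" where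
  "incr F c x = F c x - (if c = 0 then 0 else F (c - 1) x)"

lemma sum_incr: "(\<Sum>c\<in>{1..K}. incr F c x) = F K x - F 0 x"
proof (induction K)
  case 0 then show ?case by simp
next
  case (Suc K)
  have "{1..Suc K} = insert (Suc K) {1..K}" by auto
  then show ?case using Suc by (simp add: incr_def)
qed

section \<open>Chains\<close>

lemma r_chain_refl: "x \<in> A \<Longrightarrow> r_chain X r A x x"
  by (simp add: r_chain_def)

lemma r_chain_mem:
  assumes "r_chain X r A x y" shows "x \<in> A \<and> y \<in> A"
proof -
  have xA: "x \<in> A" and rt: "(\<lambda>u v. u \<in> A \<and> v \<in> A \<and> mdist X u v \<le> r)\<^sup>*\<^sup>* x y"
    using assms by (auto simp: r_chain_def)
  from rt have "y \<in> A" using xA by (induction rule: rtranclp_induct) auto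
  with xA show ?thesis by blast
qed

lemma r_chain_step:
  assumes "r_chain X r A x y" "z \<in> A" "mdist X y z \<le> r" shows "r_chain X r A x z"
proof -
  have xA: "x \<in> A" and rt: "(\<lambda>u v. u \<in> A \<and> v \<in> A \<and> mdist X u v \<le> r)\<^sup>*\<^sup>* x y"
    using assms by (auto simp: r_chain_def)
  have "y \<in> A" using r_chain_mem[OF assms(1)] by blast
  then have "(\<lambda>u v. u \<in> A \<and> v \<in> A \<and> mdist X u v \<le> r)\<^sup>*\<^sup>* x z"
    using rtranclp.rtrancl_into_rtrancl[OF rt, of z] assms by blast
  then show ?thesis using xA by (simp add: r_chain_def)
qed

lemma r_chain_induct[consumes 1, case_names base step]:
  assumes "r_chain X r A x y"
    and "P x"
    and "\<And>u v. r_chain X r A x u \<Longrightarrow> P u \<Longrightarrow> v \<in> A \<Longrightarrow> mdist X u v \<le> r \<Longrightarrow> P v"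
  shows "P y"
proof -
  have xA: "x \<in> A" and rt: "(\<lambda>u v. u \<in> A \<and> v \<in> A \<and> mdist X u v \<le> r)\<^sup>*\<^sup>* x y"
    using assms(1) by (auto simp: r_chain_def)
  from rt have "r_chain X r A x y \<and> P y"
  proof (induction rule: rtranclp_induct)
    case base
    have "r_chain X r A x x" using xA by (rule r_chain_refl)
    then show ?case using assms(2) by simp
  next
    case (step u v)
    have uv: "v \<in> A" "mdist X u v \<le> r" using step.hyps(2) by auto
    have ru: "r_chain X r A x u" "P u" using step.IH by auto
    have "r_chain X r A x v" using r_chain_step[OF ru(1) uv] .
    moreover have "P v" using assms(3)[OF ru uv] .
    ultimately show ?case by simp
  qed
  then show ?thesis by blast
qed

lemma r_chain_trans: "r_chain X r A x y \<Longrightarrow> r_chain X r A y z \<Longrightarrow> r_chain X r A x z"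
proof -
  assume a: "r_chain X r A x y" and b: "r_chain X r A y z"
  from b show ?thesis
    by (induction rule: r_chain_induct) (use a r_chain_step in auto)
qed

lemma r_chain_sym:
  assumes "r_chain X r A x y" shows "r_chain X r A y x"
proof -
  define R where "R = (\<lambda>u v. u \<in> A \<and> v \<in> A \<and> mdist X u v \<le> r)"
  have sR: "symp R" unfolding R_def symp_def by (metis mdist_commute)
  have rt: "R\<^sup>*\<^sup>* x y" using assms by (simp add: r_chain_def R_def)
  have "R\<^sup>*\<^sup>* y x" by (rule sympD[OF symp_rtranclp[OF sR] rt])
  moreover have "y \<in> A" using r_chain_mem[OF assms] by blast
  ultimately show ?thesis by (simp add: r_chain_def R_def)
qed

lemma comp_diam:
  assumes "components_diam_le X r A D" "r_chain X r A x y"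
  shows "mdist X x y \<le> D"
proof -
  have "x \<in> A" "y \<in> A" using r_chain_mem[OF assms(2)] by auto
  then show ?thesis using assms unfolding components_diam_le_def by blast
qed

section \<open>Bump functions\<close>

definition bump :: "'a metric \<Rightarrow> real \<Rightarrow> 'a set \<Rightarrow> 'a \<Rightarrow> real" where
  "bump X s S x = (if S = {} then 0 else (SUP p\<in>S. max 0 (1 - mdist X x p / s)))"

lemma bump_bdd: "bdd_above ((\<lambda>p. max 0 (1 - mdist X x p / s)) ` S)" if "s > 0"
proof -
  have "max 0 (1 - mdist X x p / s) \<le> 1" for p
    using that by (simp add: max_def)
  then show ?thesis by (intro bdd_aboveI[where M=1]) auto
qed

lemma bump_ge0: "s > 0 \<Longrightarrow> 0 \<le> bump X s S x"
proof -
  assume s: "s > 0"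
  show ?thesis
  proof (cases "S = {}")
    case True then show ?thesis by (simp add: bump_def)
  next
    case False
    then obtain p where "p \<in> S" by blast
    have "0 \<le> max 0 (1 - mdist X x p / s)" by simp
    also have "\<dots> \<le> (SUP p\<in>S. max 0 (1 - mdist X x p / s))"
      by (rule cSUP_upper[OF \<open>p \<in> S\<close> bump_bdd[OF s]])
    finally show ?thesis using False by (simp add: bump_def)
  qed
qed

lemma bump_le1: "s > 0 \<Longrightarrow> bump X s S x \<le> 1"
proof -
  assume s: "s > 0"
  show ?thesis
  proof (cases "S = {}")
    case True then show ?thesis by (simp add: bump_def)
  next
    case False
    have "(SUP p\<in>S. max 0 (1 - mdist X x p / s)) \<le> 1"
      by (rule cSUP_least[OF False]) (use s in \<open>simp add: max_def\<close>)
    then show ?thesis using False by (simp add: bump_def)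
  qed
qed

lemma bump_one: "s > 0 \<Longrightarrow> x \<in> S \<Longrightarrow> x \<in> mspace X \<Longrightarrow> bump X s S x = 1"
proof -
  assume s: "s > 0" and xS: "x \<in> S" and xX: "x \<in> mspace X"
  have "1 = max 0 (1 - mdist X x x / s)" using mdist_zero[OF xX xX] by simp
  also have "\<dots> \<le> (SUP p\<in>S. max 0 (1 - mdist X x p / s))"
    by (rule cSUP_upper[OF xS bump_bdd[OF s]])
  finally have "1 \<le> bump X s S x" using xS by (auto simp: bump_def)
  then show ?thesis using bump_le1[OF s] by (meson order_antisym)
qed

lemma bump_pos: "s > 0 \<Longrightarrow> 0 < bump X s S x \<Longrightarrow> \<exists>p\<in>S. mdist X x p < s"
proof (rule ccontr)
  assume s: "s > 0" and pos: "0 < bump X s S x" and n: "\<not> (\<exists>p\<in>S. mdist X x p < s)"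
  then have ne: "S \<noteq> {}" by (auto simp: bump_def)
  have "(SUP p\<in>S. max 0 (1 - mdist X x p / s)) \<le> 0"
  proof (rule cSUP_least[OF ne])
    fix p assume "p \<in> S"
    then have "mdist X x p \<ge> s" using n by force
    then have "mdist X x p / s \<ge> 1" using s by simp
    then show "max 0 (1 - mdist X x p / s) \<le> 0" by simp
  qed
  then show False using pos ne by (simp add: bump_def)
qed

lemma max0_mono: "(a::real) \<le> b + d \<Longrightarrow> 0 \<le> d \<Longrightarrow> max 0 a \<le> max 0 b + d"
  by (simp add: max_def)

lemma bump_lip:
  assumes s: "s > 0" and S: "S \<subseteq> mspace X" and x: "x \<in> mspace X" and y: "y \<in> mspace X"
  shows "\<bar>bump X s S x - bump X s S y\<bar> \<le> mdist X x y / s"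
proof (cases "S = {}")
  case True then show ?thesis using s by (simp add: bump_def)
next
  case ne: False
  have key: "(SUP p\<in>S. max 0 (1 - mdist X u p / s)) \<le> (SUP p\<in>S. max 0 (1 - mdist X w p / s)) + mdist X u w / s"
    if u: "u \<in> mspace X" and w: "w \<in> mspace X" for u w
  proof -
    have "(SUP p\<in>S. max 0 (1 - mdist X u p / s)) - mdist X u w / s \<le> (SUP p\<in>S. max 0 (1 - mdist X w p / s))"
    proof -
      have "(SUP p\<in>S. max 0 (1 - mdist X u p / s)) \<le> (SUP p\<in>S. max 0 (1 - mdist X w p / s)) + mdist X u w / s"
      proof (rule cSUP_least[OF ne])
        fix p assume pS: "p \<in> S"
        then have pX: "p \<in> mspace X" using S by blast
        have tri: "mdist X w p \<le> mdist X w u + mdist X u p" using mdist_triangle[OF w u pX] .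
        have "max 0 (1 - mdist X u p / s) \<le> max 0 (1 - mdist X w p / s) + mdist X u w / s"
        proof -
          have tri': "mdist X w p \<le> mdist X u w + mdist X u p" using tri by (simp add: mdist_commute)
          have t2: "mdist X w p / s \<le> mdist X u w / s + mdist X u p / s"
            using divide_right_mono[OF tri', of s] s by (simp add: add_divide_distrib)
          have "1 - mdist X u p / s \<le> 1 - mdist X w p / s + mdist X u w / s"
            using t2 by linarith
          moreover have "0 \<le> mdist X u w / s" using s by simp
          ultimately show ?thesis by (rule max0_mono)
        qed
        also have "\<dots> \<le> (SUP p\<in>S. max 0 (1 - mdist X w p / s)) + mdist X u w / s"
          using cSUP_upper[OF pS bump_bdd[OF s]] by simp
        finally show "max 0 (1 - mdist X u p / s) \<le> (SUP p\<in>S. max 0 (1 - mdist X w p / s)) + mdist X u w / s" .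
      qed
      then show ?thesis by simp
    qed
    then show ?thesis by simp
  qed
  have k1: "bump X s S x \<le> bump X s S y + mdist X x y / s"
    using key[OF x y] ne by (simp add: bump_def)
  have k2: "bump X s S y \<le> bump X s S x + mdist X x y / s"
    using key[OF y x] ne by (simp add: bump_def mdist_commute[of X y x])
  show ?thesis using k1 k2 by (simp add: abs_le_iff)
qed

lemma min_lip: "\<bar>min (a::real) b - min c d\<bar> \<le> max \<bar>a - c\<bar> \<bar>b - d\<bar>"
proof -
  have "a - c \<le> \<bar>a - c\<bar>" "c - a \<le> \<bar>a - c\<bar>" "b - d \<le> \<bar>b - d\<bar>" "d - b \<le> \<bar>b - d\<bar>"
    "\<bar>a - c\<bar> \<le> max \<bar>a - c\<bar> \<bar>b - d\<bar>" "\<bar>b - d\<bar> \<le> max \<bar>a - c\<bar> \<bar>b - d\<bar>" by auto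
  moreover have "min a b \<le> a" "min a b \<le> b" "min c d \<le> c" "min c d \<le> d"
     "min a b = a \<or> min a b = b" "min c d = c \<or> min c d = d" by auto
  ultimately show ?thesis unfolding abs_le_iff by linarith
qed

lemma max_lip: "\<bar>max (a::real) b - max c d\<bar> \<le> max \<bar>a - c\<bar> \<bar>b - d\<bar>"
proof -
  have "a - c \<le> \<bar>a - c\<bar>" "c - a \<le> \<bar>a - c\<bar>" "b - d \<le> \<bar>b - d\<bar>" "d - b \<le> \<bar>b - d\<bar>"
    "\<bar>a - c\<bar> \<le> max \<bar>a - c\<bar> \<bar>b - d\<bar>" "\<bar>b - d\<bar> \<le> max \<bar>a - c\<bar> \<bar>b - d\<bar>" by auto
  moreover have "a \<le> max a b" "b \<le> max a b" "c \<le> max c d" "d \<le> max c d"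
     "max a b = a \<or> max a b = b" "max c d = c \<or> max c d = d" by auto
  ultimately show ?thesis unfolding abs_le_iff by linarith
qed

lemma min_diff_le: "(p::real) \<le> q \<Longrightarrow> min a q - min a p \<le> q - p"
  by (simp add: min_def)
lemma min_diff_ge: "(p::real) \<le> q \<Longrightarrow> 0 \<le> min a q - min a p"
  by (simp add: min_def)
lemma max_diff_le: "(p::real) \<le> q \<Longrightarrow> max a q - max a p \<le> q - p"
  by (simp add: max_def)
lemma max_diff_ge: "(p::real) \<le> q \<Longrightarrow> 0 \<le> max a q - max a p"
  by (simp add: max_def)

lemma cut_lip:
  fixes p p' u u' :: real
  assumes "0 \<le> p" "p \<le> 1" "0 \<le> p'" "p' \<le> 1" "0 \<le> u" "u \<le> 1" "0 \<le> u'" "u' \<le> 1"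
  shows "\<bar>(1 - p * (1 - u)) - (1 - p' * (1 - u'))\<bar> \<le> \<bar>p - p'\<bar> + \<bar>u - u'\<bar>"
proof -
  have eq: "(1 - p * (1 - u)) - (1 - p' * (1 - u')) = (p' - p) * (1 - u') + p * (u - u')"
    by (simp add: algebra_simps)
  have "\<bar>(p' - p) * (1 - u')\<bar> = \<bar>p - p'\<bar> * (1 - u')"
    using assms by (simp add: abs_mult abs_minus_commute)
  also have "\<dots> \<le> \<bar>p - p'\<bar>" by (rule mult_left_le) (use assms in auto)
  finally have "\<bar>(p' - p) * (1 - u')\<bar> \<le> \<bar>p - p'\<bar>" .
  moreover have "\<bar>p * (u - u')\<bar> \<le> \<bar>u - u'\<bar>"
  proof -
    have "\<bar>p * (u - u')\<bar> = p * \<bar>u - u'\<bar>" using assms by (simp add: abs_mult)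
    also have "\<dots> \<le> \<bar>u - u'\<bar>" by (rule mult_left_le_one_le) (use assms in auto)
    finally show ?thesis .
  qed
  ultimately show ?thesis unfolding eq by (meson abs_triangle_ineq add_mono order_trans)
qed

lemma cut_01:
  fixes p u :: real
  assumes "0 \<le> p" "p \<le> 1" "0 \<le> u" "u \<le> 1"
  shows "0 \<le> 1 - p * (1 - u)" "1 - p * (1 - u) \<le> 1"
proof -
  have "p * (1 - u) \<le> 1" using assms by (simp add: mult_le_one)
  moreover have "0 \<le> p * (1 - u)" using assms by simp
  ultimately show "0 \<le> 1 - p * (1 - u)" "1 - p * (1 - u) \<le> 1" by linarith+
qed

lemma cut_mono:
  fixes p u u' :: real
  assumes "0 \<le> p" "u \<le> u'"
  shows "1 - p * (1 - u) \<le> 1 - p * (1 - u')"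
  using assms by (simp add: mult_left_mono)

lemma tri4:
  assumes "a \<in> mspace X" "b \<in> mspace X" "c \<in> mspace X" "d \<in> mspace X"
  shows "mdist X a d \<le> mdist X a b + mdist X b c + mdist X c d"
  using mdist_triangle[of a X b d] mdist_triangle[of b X c d] assms by linarith

lemma tri5:
  assumes "a \<in> mspace X" "b \<in> mspace X" "c \<in> mspace X" "d \<in> mspace X" "e \<in> mspace X"
  shows "mdist X a e \<le> mdist X a b + mdist X b c + mdist X c d + mdist X d e"
  using mdist_triangle[of a X b e] tri4[of b X c d e] assms by linarith

lemma tri6:
  assumes "a \<in> mspace X" "b \<in> mspace X" "c \<in> mspace X" "d \<in> mspace X" "e \<in> mspace X" "g \<in> mspace X"
  shows "mdist X a g \<le> mdist X a b + mdist X b c + mdist X c d + mdist X d e + mdist X e g"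
  using mdist_triangle[of a X b g] tri5[of b X c d e g] assms by linarith

lemma abs3: "\<bar>(A::real) + B - C\<bar> \<le> \<bar>A\<bar> + \<bar>B\<bar> + \<bar>C\<bar>"
  using abs_triangle_ineq[of "A + B" "- C"] abs_triangle_ineq[of A B] by simp

definition comb :: "real \<Rightarrow> real \<Rightarrow> ('a \<Rightarrow> real) \<Rightarrow> ('a \<Rightarrow> real) \<Rightarrow> (nat \<Rightarrow> 'a \<Rightarrow> real)
    \<Rightarrow> (nat \<Rightarrow> 'a \<Rightarrow> real) \<Rightarrow> nat \<Rightarrow> 'a \<Rightarrow> real" where
"comb tau dl W h L Ow c x =
  (let ps = clp ((W x - tau) / dl); a = clp ((W x - (tau + dl)) / dl); ch = clp ((h x - dl) / dl);
       Bt = (\<lambda>j. min (1 - ps * (1 - L j x)) (1 - ch * (1 - Ow j x)));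
       Bs = (if c = 0 then 0 else Bt (c - 1))
   in min a (1 - ps * (1 - L c x)) + max a Bs - a)"

lemma stage:
  fixes X :: "'a metric" and L Ow :: "nat \<Rightarrow> 'a \<Rightarrow> real" and W h :: "'a \<Rightarrow> real"
    and tt :: "'a \<Rightarrow> 'c" and Bp :: "'c \<Rightarrow> nat \<Rightarrow> 'a set"
  assumes r: "0 < r" and th: "0 < th" and dl: "0 < dl" and tau: "0 \<le> tau" and rho: "0 < rho"
    and El: "0 \<le> El" and Ef: "0 \<le> Ef" and mM: "m \<le> M" and v0: "0 \<le> v" and e0: "0 \<le> eps" and w0: "0 \<le> w"
    and L01: "\<And>c x. x \<in> mspace X \<Longrightarrow> 0 \<le> L c x \<and> L c x \<le> 1"
    and Lmono: "\<And>c x. x \<in> mspace X \<Longrightarrow> L c x \<le> L (Suc c) x"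
    and Ltop: "\<And>c x. x \<in> mspace X \<Longrightarrow> M \<le> c \<Longrightarrow> L c x = 1"
    and Lvar: "\<And>c x y. x \<in> mspace X \<Longrightarrow> y \<in> mspace X \<Longrightarrow> mdist X x y \<le> r \<Longrightarrow> \<bar>L c x - L c y\<bar> \<le> v"
    and Lcomp: "\<And>c. components_diam_le X r {x \<in> mspace X. tau \<le> W x \<and> th \<le> incr L c x} El"
    and L0: "\<And>x. x \<in> mspace X \<Longrightarrow> tau < W x \<Longrightarrow> L 0 x = 0"
    and Wvar: "\<And>x y. x \<in> mspace X \<Longrightarrow> y \<in> mspace X \<Longrightarrow> mdist X x y \<le> r \<Longrightarrow> \<bar>W x - W y\<bar> \<le> eps"
    and hvar: "\<And>x y. x \<in> mspace X \<Longrightarrow> y \<in> mspace X \<Longrightarrow> mdist X x y \<le> r \<Longrightarrow> \<bar>h x - h y\<bar> \<le> eps"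
    and O01: "\<And>j x. x \<in> mspace X \<Longrightarrow> 0 \<le> Ow j x \<and> Ow j x \<le> 1"
    and Omono: "\<And>j x. x \<in> mspace X \<Longrightarrow> Ow j x \<le> Ow (Suc j) x"
    and Otop: "\<And>j x. x \<in> mspace X \<Longrightarrow> m \<le> j \<Longrightarrow> Ow j x = 1"
    and Ovar: "\<And>j x y. x \<in> mspace X \<Longrightarrow> y \<in> mspace X \<Longrightarrow> mdist X x y \<le> r \<Longrightarrow> 0 < h x \<Longrightarrow> 0 < h y
          \<Longrightarrow> \<bar>Ow j x - Ow j y\<bar> \<le> w"
    and Onear: "\<And>j x. x \<in> mspace X \<Longrightarrow> 0 < h x \<Longrightarrow> 0 < incr Ow j x
          \<Longrightarrow> j \<le> m \<and> (\<exists>p\<in>Bp (tt x) j. mdist X x p < rho/3)"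
    and tilecons: "\<And>x y. x \<in> mspace X \<Longrightarrow> y \<in> mspace X \<Longrightarrow> mdist X x y \<le> r \<Longrightarrow> 0 < h x \<Longrightarrow> 0 < h y
          \<Longrightarrow> tt x = tt y"
    and Bpprop: "\<And>x j. x \<in> mspace X \<Longrightarrow> 0 < h x \<Longrightarrow> j \<le> m
          \<Longrightarrow> Bp (tt x) j \<subseteq> mspace X \<and> components_diam_le X rho (Bp (tt x) j) Ef"
    and small1: "eps < dl" and small2: "2 * (eps/dl + v) < th" and small3: "El + 2*r \<le> rho/3"
  shows stage_01: "\<And>c x. x \<in> mspace X \<Longrightarrow> 0 \<le> comb tau dl W h L Ow c x \<and> comb tau dl W h L Ow c x \<le> 1"
    and stage_mono: "\<And>c x. x \<in> mspace X \<Longrightarrow> comb tau dl W h L Ow c x \<le> comb tau dl W h L Ow (Suc c) x"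
    and stage_top: "\<And>c x. x \<in> mspace X \<Longrightarrow> Suc M \<le> c \<Longrightarrow> comb tau dl W h L Ow c x = 1"
    and stage_var: "\<And>c x y. x \<in> mspace X \<Longrightarrow> y \<in> mspace X \<Longrightarrow> mdist X x y \<le> r
          \<Longrightarrow> \<bar>comb tau dl W h L Ow c x - comb tau dl W h L Ow c y\<bar> \<le> 4*eps/dl + 2 * v + w"
    and stage_comp: "\<And>c. components_diam_le X r
          {x \<in> mspace X. tau + 2*dl \<le> max (W x) (h x) \<and> th \<le> incr (comb tau dl W h L Ow) c x}
          (2*(El + r + rho/3 + Ef))"
    and stage_0: "\<And>x. x \<in> mspace X \<Longrightarrow> comb tau dl W h L Ow 0 x = 0"
proof -
  define ps where "ps x = clp ((W x - tau) / dl)" for x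
  define a where "a x = clp ((W x - (tau + dl)) / dl)" for x
  define ch where "ch x = clp ((h x - dl) / dl)" for x
  define Lc where "Lc j x = 1 - ps x * (1 - L j x)" for j x
  define Bo where "Bo j x = 1 - ch x * (1 - Ow j x)" for j x
  define Bt where "Bt j x = min (Lc j x) (Bo j x)" for j x
  define Bs where "Bs c x = (if c = 0 then 0 else Bt (c - 1) x)" for c x
  define G where "G = comb tau dl W h L Ow"
  have Geq: "G c x = min (a x) (Lc c x) + max (a x) (Bs c x) - a x" for c x
    unfolding G_def comb_def Let_def ps_def a_def ch_def Lc_def Bo_def Bt_def Bs_def by simp
  have ps01: "0 \<le> ps x" "ps x \<le> 1" for x unfolding ps_def using clp_ge0 clp_le1 by auto
  have a01: "0 \<le> a x" "a x \<le> 1" for x unfolding a_def using clp_ge0 clp_le1 by auto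
  have ch01: "0 \<le> ch x" "ch x \<le> 1" for x unfolding ch_def using clp_ge0 clp_le1 by auto
  have apos: "tau + dl < W x" if "0 < a x" for x
  proof -
    have "0 < (W x - (tau + dl)) / dl" using clp_pos that unfolding a_def by blast
    then show ?thesis using dl by (simp add: zero_less_divide_iff)
  qed
  have alt1: "W x < tau + 2*dl" if "a x < 1" for x
  proof -
    have "(W x - (tau + dl)) / dl < 1" using clp_lt1 that unfolding a_def by blast
    then show ?thesis using dl by (simp add: divide_less_eq)
  qed
  have psone: "ps x = 1" if "tau + dl \<le> W x" for x
  proof -
    have "1 \<le> (W x - tau) / dl" using that dl by (simp add: le_divide_eq)
    then show ?thesis unfolding ps_def by (rule clp_one)
  qed
  have pspos: "tau < W x" if "0 < ps x" for x
  proof -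
    have "0 < (W x - tau) / dl" using clp_pos that unfolding ps_def by blast
    then show ?thesis using dl by (simp add: zero_less_divide_iff)
  qed
  have chone: "ch x = 1" if "2*dl \<le> h x" for x
  proof -
    have "1 \<le> (h x - dl) / dl" using that dl by (simp add: le_divide_eq)
    then show ?thesis unfolding ch_def by (rule clp_one)
  qed
  have chpos: "dl < h x" if "0 < ch x" for x
  proof -
    have "0 < (h x - dl) / dl" using clp_pos that unfolding ch_def by blast
    then show ?thesis using dl by (simp add: zero_less_divide_iff)
  qed
  have Lc01: "0 \<le> Lc j x \<and> Lc j x \<le> 1" if "x \<in> mspace X" for j x
    using cut_01[of "ps x" "L j x"] ps01[of x] L01[OF that, of j] unfolding Lc_def by auto
  have Lcmono: "Lc j x \<le> Lc (Suc j) x" if "x \<in> mspace X" for j x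
    unfolding Lc_def by (rule cut_mono[OF ps01(1) Lmono[OF that]])
  have Lctop: "Lc j x = 1" if "x \<in> mspace X" "M \<le> j" for j x
    unfolding Lc_def using Ltop[OF that] by simp
  have Bo01: "0 \<le> Bo j x \<and> Bo j x \<le> 1" if "x \<in> mspace X" for j x
    using cut_01[of "ch x" "Ow j x"] ch01[of x] O01[OF that, of j] unfolding Bo_def by auto
  have Bomono: "Bo j x \<le> Bo (Suc j) x" if "x \<in> mspace X" for j x
    unfolding Bo_def by (rule cut_mono[OF ch01(1) Omono[OF that]])
  have Botop: "Bo j x = 1" if "x \<in> mspace X" "m \<le> j" for j x
    unfolding Bo_def using Otop[OF that] by simp
  have Bt01: "0 \<le> Bt j x \<and> Bt j x \<le> 1" if "x \<in> mspace X" for j x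
    using Lc01[OF that, of j] Bo01[OF that, of j] unfolding Bt_def by (simp add: min_def)
  have Btmono: "Bt j x \<le> Bt (Suc j) x" if "x \<in> mspace X" for j x
    unfolding Bt_def by (rule min.mono[OF Lcmono[OF that] Bomono[OF that]])
  have Bttop: "Bt j x = 1" if "x \<in> mspace X" "M \<le> j" for j x
    unfolding Bt_def using Lctop[OF that] Botop[OF that(1)] that(2) mM by simp
  have Bs01: "0 \<le> Bs c x \<and> Bs c x \<le> 1" if "x \<in> mspace X" for c x
    using Bt01[OF that] unfolding Bs_def by simp
  have Bsmono: "Bs c x \<le> Bs (Suc c) x" if "x \<in> mspace X" for c x
  proof (cases c)
    case 0 then show ?thesis using Bt01[OF that, of 0] unfolding Bs_def by simp
  next
    case (Suc c') then show ?thesis using Btmono[OF that, of c'] unfolding Bs_def by simp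
  qed
  have Bstop: "Bs c x = 1" if "x \<in> mspace X" "Suc M \<le> c" for c x
    using Bttop[OF that(1), of "c - 1"] that(2) unfolding Bs_def by simp

  have da: "\<bar>a x - a y\<bar> \<le> eps/dl" if "x \<in> mspace X" "y \<in> mspace X" "mdist X x y \<le> r" for x y
    unfolding a_def by (rule clp_div_lip[OF Wvar[OF that] dl])
  have dps: "\<bar>ps x - ps y\<bar> \<le> eps/dl" if "x \<in> mspace X" "y \<in> mspace X" "mdist X x y \<le> r" for x y
    unfolding ps_def by (rule clp_div_lip[OF Wvar[OF that] dl])
  have dch: "\<bar>ch x - ch y\<bar> \<le> eps/dl" if "x \<in> mspace X" "y \<in> mspace X" "mdist X x y \<le> r" for x y
    unfolding ch_def by (rule clp_div_lip[OF hvar[OF that] dl])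
  have dLc: "\<bar>Lc j x - Lc j y\<bar> \<le> eps/dl + v" if "x \<in> mspace X" "y \<in> mspace X" "mdist X x y \<le> r" for j x y
  proof -
    have "\<bar>Lc j x - Lc j y\<bar> \<le> \<bar>ps x - ps y\<bar> + \<bar>L j x - L j y\<bar>"
      unfolding Lc_def
      by (rule cut_lip) (use ps01 L01[OF that(1), of j] L01[OF that(2), of j] in auto)
    then show ?thesis using dps[OF that] Lvar[OF that, of j] by linarith
  qed
  have dBo: "\<bar>Bo j x - Bo j y\<bar> \<le> eps/dl + w" if "x \<in> mspace X" "y \<in> mspace X" "mdist X x y \<le> r" for j x y
  proof (cases "ch x = 0 \<and> ch y = 0")
    case True
    then show ?thesis unfolding Bo_def using e0 dl w0 by simp
  next
    case False
    then have "0 < ch x \<or> 0 < ch y" using ch01[of x] ch01[of y] by linarith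
    then have "dl < h x \<or> dl < h y" using chpos by blast
    moreover have "\<bar>h x - h y\<bar> \<le> eps" using hvar[OF that] .
    ultimately have hp: "0 < h x" "0 < h y" using small1 e0 dl by linarith+
    have "\<bar>Bo j x - Bo j y\<bar> \<le> \<bar>ch x - ch y\<bar> + \<bar>Ow j x - Ow j y\<bar>"
      unfolding Bo_def
      by (rule cut_lip) (use ch01 O01[OF that(1), of j] O01[OF that(2), of j] in auto)
    then show ?thesis using dch[OF that] Ovar[OF that hp, of j] by linarith
  qed
  have dBt: "\<bar>Bt j x - Bt j y\<bar> \<le> 2*eps/dl + v + w" if "x \<in> mspace X" "y \<in> mspace X" "mdist X x y \<le> r" for j x y
  proof -
    have "\<bar>Bt j x - Bt j y\<bar> \<le> max \<bar>Lc j x - Lc j y\<bar> \<bar>Bo j x - Bo j y\<bar>"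
      unfolding Bt_def by (rule min_lip)
    moreover have "max \<bar>Lc j x - Lc j y\<bar> \<bar>Bo j x - Bo j y\<bar> \<le> 2*eps/dl + v + w"
      by (rule max.boundedI) (use dLc[OF that, of j] dBo[OF that, of j] v0 w0 e0 dl in \<open>simp_all add: divide_nonneg_pos\<close>)
    ultimately show ?thesis by linarith
  qed
  have dBs: "\<bar>Bs c x - Bs c y\<bar> \<le> 2*eps/dl + v + w" if "x \<in> mspace X" "y \<in> mspace X" "mdist X x y \<le> r" for c x y
    using dBt[OF that, of "c - 1"] e0 dl v0 w0 unfolding Bs_def by (simp add: divide_nonneg_pos)
  have dminLc: "\<bar>min (a x) (Lc j x) - min (a y) (Lc j y)\<bar> \<le> eps/dl + v"
    if "x \<in> mspace X" "y \<in> mspace X" "mdist X x y \<le> r" for j x y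
  proof -
    have "max \<bar>a x - a y\<bar> \<bar>Lc j x - Lc j y\<bar> \<le> eps/dl + v"
      by (rule max.boundedI) (use da[OF that] dLc[OF that, of j] v0 in linarith)+
    then show ?thesis using min_lip[of "a x" "Lc j x" "a y" "Lc j y"] by linarith
  qed
  have dmaxBs: "\<bar>max (a x) (Bs j x) - max (a y) (Bs j y)\<bar> \<le> 2*eps/dl + v + w"
    if "x \<in> mspace X" "y \<in> mspace X" "mdist X x y \<le> r" for j x y
  proof -
    have "0 \<le> eps/dl" using e0 dl by simp
    then have "max \<bar>a x - a y\<bar> \<bar>Bs j x - Bs j y\<bar> \<le> 2*eps/dl + v + w"
      by (intro max.boundedI) (use da[OF that] dBs[OF that, of j] v0 w0 in linarith)+
    then show ?thesis using max_lip[of "a x" "Bs j x" "a y" "Bs j y"] by linarith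
  qed

  show "\<And>c x. x \<in> mspace X \<Longrightarrow> 0 \<le> comb tau dl W h L Ow c x \<and> comb tau dl W h L Ow c x \<le> 1"
  proof -
    fix c x assume x: "x \<in> mspace X"
    have "min (a x) (Lc c x) \<le> a x" "0 \<le> min (a x) (Lc c x)" using a01[of x] Lc01[OF x, of c] by auto
    moreover have "a x \<le> max (a x) (Bs c x)" "max (a x) (Bs c x) \<le> 1" using a01[of x] Bs01[OF x, of c] by auto
    ultimately have "0 \<le> G c x \<and> G c x \<le> 1" unfolding Geq by linarith
    then show "0 \<le> comb tau dl W h L Ow c x \<and> comb tau dl W h L Ow c x \<le> 1" by (simp add: G_def)
  qed
  show "\<And>c x. x \<in> mspace X \<Longrightarrow> comb tau dl W h L Ow c x \<le> comb tau dl W h L Ow (Suc c) x"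
  proof -
    fix c x assume x: "x \<in> mspace X"
    have "min (a x) (Lc c x) \<le> min (a x) (Lc (Suc c) x)" by (rule min.mono[OF order_refl Lcmono[OF x]])
    moreover have "max (a x) (Bs c x) \<le> max (a x) (Bs (Suc c) x)" by (rule max.mono[OF order_refl Bsmono[OF x]])
    ultimately have "G c x \<le> G (Suc c) x" unfolding Geq by linarith
    then show "comb tau dl W h L Ow c x \<le> comb tau dl W h L Ow (Suc c) x" by (simp add: G_def)
  qed
  show "\<And>c x. x \<in> mspace X \<Longrightarrow> Suc M \<le> c \<Longrightarrow> comb tau dl W h L Ow c x = 1"
  proof -
    fix c x assume x: "x \<in> mspace X" and c: "Suc M \<le> c"
    have "Lc c x = 1" using Lctop[OF x] c by simp
    moreover have "Bs c x = 1" using Bstop[OF x c] .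
    ultimately have "G c x = 1" unfolding Geq using a01[of x] by (simp add: min_def max_def)
    then show "comb tau dl W h L Ow c x = 1" by (simp add: G_def)
  qed
  show "\<And>x. x \<in> mspace X \<Longrightarrow> comb tau dl W h L Ow 0 x = 0"
  proof -
    fix x assume x: "x \<in> mspace X"
    have G0: "G 0 x = min (a x) (Lc 0 x)" unfolding Geq Bs_def using a01[of x] by (simp add: max_def)
    have "min (a x) (Lc 0 x) = 0"
    proof (cases "a x = 0")
      case True then show ?thesis using Lc01[OF x, of 0] by (simp add: min_def)
    next
      case False
      then have "0 < a x" using a01[of x] by linarith
      then have W: "tau + dl < W x" by (rule apos)
      then have "ps x = 1" by (intro psone) simp
      moreover have "L 0 x = 0" using L0[OF x] W dl by linarith
      ultimately have "Lc 0 x = 0" unfolding Lc_def by simp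
      then show ?thesis using \<open>0 < a x\<close> by simp
    qed
    then show "comb tau dl W h L Ow 0 x = 0" using G0 by (simp add: G_def)
  qed
  show "\<And>c x y. x \<in> mspace X \<Longrightarrow> y \<in> mspace X \<Longrightarrow> mdist X x y \<le> r
          \<Longrightarrow> \<bar>comb tau dl W h L Ow c x - comb tau dl W h L Ow c y\<bar> \<le> 4*eps/dl + 2 * v + w"
  proof -
    fix c x y assume xy: "x \<in> mspace X" "y \<in> mspace X" "mdist X x y \<le> r"
    have eq: "G c x - G c y = (min (a x) (Lc c x) - min (a y) (Lc c y)) + (max (a x) (Bs c x) - max (a y) (Bs c y)) - (a x - a y)"
      unfolding Geq by simp
    have "\<bar>G c x - G c y\<bar> \<le> \<bar>min (a x) (Lc c x) - min (a y) (Lc c y)\<bar> + \<bar>max (a x) (Bs c x) - max (a y) (Bs c y)\<bar> + \<bar>a x - a y\<bar>"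
      unfolding eq by (rule abs3)
    also have "\<dots> \<le> (eps/dl + v) + (2*eps/dl + v + w) + eps/dl"
      using dminLc[OF xy, of c] dmaxBs[OF xy, of c] da[OF xy] by linarith
    also have "\<dots> = 4*eps/dl + 2 * v + w" by (simp add: field_simps)
    finally show "\<bar>comb tau dl W h L Ow c x - comb tau dl W h L Ow c y\<bar> \<le> 4*eps/dl + 2 * v + w"
      by (simp add: G_def)
  qed
  show "\<And>c. components_diam_le X r
          {x \<in> mspace X. tau + 2*dl \<le> max (W x) (h x) \<and> th \<le> incr (comb tau dl W h L Ow) c x}
          (2*(El + r + rho/3 + Ef))"
  proof -
    fix c
    define S where "S = {x \<in> mspace X. tau + 2*dl \<le> max (W x) (h x) \<and> th \<le> incr G c x}"
    define T where "T j = {x \<in> mspace X. tau \<le> W x \<and> th \<le> incr L j x}" for j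
    define P where "P x = min (a x) (Lc c x) - (if c = 0 then 0 else min (a x) (Lc (c - 1) x))" for x
    define Q where "Q x = (max (a x) (Bs c x) - a x) - (if c = 0 then 0 else max (a x) (Bs (c - 1) x) - a x)" for x
    have TC: "components_diam_le X r (T j) El" for j unfolding T_def by (rule Lcomp)
    have Sx: "x \<in> mspace X" if "x \<in> S" for x using that unfolding S_def by blast
    have incrG: "incr G c x = P x + Q x" for x
      unfolding incr_def P_def Q_def Geq by (cases "c = 0") simp_all
    have P0: "0 \<le> P x" if x: "x \<in> mspace X" for x
    proof (cases "c = 0")
      case True then show ?thesis using a01[of x] Lc01[OF x, of 0] by (simp add: P_def)
    next
      case False
      then have "Lc (c - 1) x \<le> Lc c x" using Lcmono[OF x, of "c - 1"] by simp
      from min_diff_ge[OF this, of "a x"] show ?thesis using False by (simp add: P_def)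
    qed
    have Q0: "0 \<le> Q x" if x: "x \<in> mspace X" for x
    proof (cases "c = 0")
      case True then show ?thesis using a01[of x] by (simp add: Q_def)
    next
      case False
      then have "Bs (c - 1) x \<le> Bs c x" using Bsmono[OF x, of "c - 1"] by simp
      from max_diff_ge[OF this, of "a x"] show ?thesis using False by (simp add: Q_def)
    qed
    have PQ: "Q x = 0" if x: "x \<in> mspace X" and p: "0 < P x" for x
    proof (cases "c = 0")
      case True then show ?thesis using a01[of x] by (simp add: Q_def Bs_def)
    next
      case False
      have lt: "Lc (c - 1) x < a x"
      proof (rule ccontr)
        assume "\<not> Lc (c - 1) x < a x"
        then have "min (a x) (Lc (c - 1) x) = a x" by simp
        moreover have "min (a x) (Lc c x) \<le> a x" by simp
        ultimately show False using p False unfolding P_def by simp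
      qed
      have b1: "Bs c x < a x" using lt False unfolding Bs_def Bt_def by simp
      have b2: "Bs (c - 1) x < a x" using Bsmono[OF x, of "c - 1"] b1 False by simp
      show ?thesis using b1 b2 False unfolding Q_def by simp
    qed
    have Pvar: "\<bar>P x - P y\<bar> \<le> 2 * (eps/dl + v)" if xy: "x \<in> mspace X" "y \<in> mspace X" "mdist X x y \<le> r" for x y
    proof (cases "c = 0")
      case True then show ?thesis using dminLc[OF xy, of 0] e0 dl v0 by (simp add: P_def)
    next
      case False
      have "P x - P y = (min (a x) (Lc c x) - min (a y) (Lc c y)) - (min (a x) (Lc (c - 1) x) - min (a y) (Lc (c - 1) y))"
        using False unfolding P_def by simp
      then show ?thesis using dminLc[OF xy, of c] dminLc[OF xy, of "c - 1"] by (simp add: abs_le_iff)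
    qed
    have Ptype: "x \<in> T c" if xS: "x \<in> S" and p: "th \<le> P x" for x
    proof -
      have x: "x \<in> mspace X" using Sx[OF xS] .
      have "P x \<le> a x"
      proof (cases "c = 0")
        case True then show ?thesis by (simp add: P_def)
      next
        case False
        have m0: "0 \<le> min (a x) (Lc (c - 1) x)" using a01[of x] Lc01[OF x, of "c - 1"] by simp
        have m1: "min (a x) (Lc c x) \<le> a x" by simp
        have "P x = min (a x) (Lc c x) - min (a x) (Lc (c - 1) x)" using False by (simp add: P_def)
        then show ?thesis using m0 m1 by linarith
      qed
      then have "0 < a x" using p th by linarith
      then have W: "tau + dl < W x" by (rule apos)
      then have ps1: "ps x = 1" by (intro psone) simp
      have LcL: "Lc j x = L j x" for j unfolding Lc_def ps1 by simp
      have "P x \<le> incr L c x"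
      proof (cases "c = 0")
        case True then show ?thesis by (simp add: P_def incr_def LcL)
      next
        case False
        have "L (c - 1) x \<le> L c x" using Lmono[OF x, of "c - 1"] False by simp
        from min_diff_le[OF this, of "a x"] show ?thesis using False by (simp add: P_def incr_def LcL)
      qed
      then show ?thesis unfolding T_def using x W p dl by simp
    qed
    have Qtype: "c \<noteq> 0 \<and> 0 < h x \<and> ((c - 1 \<le> m \<and> (\<exists>p\<in>Bp (tt x) (c - 1). mdist X x p < rho/3)) \<or> x \<in> T (c - 1))"
      if xS: "x \<in> S" and q: "th \<le> Q x" for x
    proof -
      have x: "x \<in> mspace X" using Sx[OF xS] .
      have c0: "c \<noteq> 0"
      proof
        assume "c = 0"
        then have "Q x = 0" using a01[of x] by (simp add: Q_def Bs_def)
        then show False using q th by simp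
      qed
      then obtain j where cj: "c = Suc j" by (cases c) auto
      have "max (a x) (Bs c x) \<le> 1" using a01[of x] Bs01[OF x, of c] by simp
      moreover have "a x \<le> max (a x) (Bs (c - 1) x)" by simp
      moreover have "Q x = max (a x) (Bs c x) - max (a x) (Bs (c - 1) x)" using c0 by (simp add: Q_def)
      ultimately have "Q x \<le> 1 - a x" by linarith
      then have "a x < 1" using q th by linarith
      then have "W x < tau + 2*dl" by (rule alt1)
      moreover have "tau + 2*dl \<le> max (W x) (h x)" using xS unfolding S_def by blast
      ultimately have hx: "tau + 2*dl \<le> h x" by (simp add: max_def split: if_splits)
      then have hpos: "0 < h x" using tau dl by linarith
      have ch1: "ch x = 1" using hx tau by (intro chone) linarith
      have BoO: "Bo i x = Ow i x" for i unfolding Bo_def ch1 by simp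
      have Qeq: "Q x = max (a x) (Bt j x) - max (a x) (Bs j x)" unfolding Q_def Bs_def cj by simp
      have "Bs j x \<le> Bt j x" using Bsmono[OF x, of j] unfolding Bs_def by simp
      from max_diff_le[OF this, of "a x"] have qle: "Q x \<le> Bt j x - Bs j x" unfolding Qeq .
      have near: "j \<le> m \<and> (\<exists>p\<in>Bp (tt x) j. mdist X x p < rho/3)" if "th \<le> incr Ow j x"
        using Onear[OF x hpos] that th by simp
      show ?thesis
      proof (cases "j = 0")
        case True
        have "th \<le> Bt 0 x" using qle q True unfolding Bs_def by simp
        also have "\<dots> \<le> Bo 0 x" unfolding Bt_def by simp
        finally have "th \<le> incr Ow 0 x" unfolding BoO incr_def by simp
        then show ?thesis using near c0 hpos cj True by simp
      next
        case False
        have q2: "th \<le> Bt j x - Bt (j - 1) x" using qle q False unfolding Bs_def by simp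
        show ?thesis
        proof (cases "Bo (j - 1) x \<le> Lc (j - 1) x")
          case True
          then have "Bt (j - 1) x = Bo (j - 1) x" unfolding Bt_def by simp
          moreover have "Bt j x \<le> Bo j x" unfolding Bt_def by simp
          ultimately have "th \<le> incr Ow j x" using q2 False unfolding incr_def BoO by simp
          then show ?thesis using near c0 hpos cj by simp
        next
          case nle: False
          then have "Bt (j - 1) x = Lc (j - 1) x" unfolding Bt_def by simp
          moreover have "Bt j x \<le> Lc j x" unfolding Bt_def by simp
          ultimately have q3: "th \<le> Lc j x - Lc (j - 1) x" using q2 by simp
          have eqL: "Lc j x - Lc (j - 1) x = ps x * (L j x - L (j - 1) x)"
            unfolding Lc_def by (simp add: algebra_simps)
          have Dge: "0 \<le> L j x - L (j - 1) x" using Lmono[OF x, of "j - 1"] False by simp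
          have "ps x * (L j x - L (j - 1) x) \<le> L j x - L (j - 1) x"
            by (rule mult_left_le_one_le[OF Dge ps01(1) ps01(2)])
          then have thD: "th \<le> incr L j x" using q3 eqL False unfolding incr_def by simp
          have "0 < ps x"
          proof (rule ccontr)
            assume "\<not> 0 < ps x"
            then have "ps x = 0" using ps01[of x] by linarith
            then show False using q3 eqL th by simp
          qed
          then have "tau < W x" by (rule pspos)
          then have "x \<in> T j" unfolding T_def using x thD by simp
          then show ?thesis using c0 hpos cj by simp
        qed
      qed
    qed
    have sep: False if xS: "x \<in> S" and yS: "y \<in> S" and d: "mdist X x y \<le> r" and p: "th \<le> P x" and q: "th \<le> Q y" for x y
    proof -
      have x: "x \<in> mspace X" and y: "y \<in> mspace X" using Sx xS yS by auto
      have "P y = 0"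
      proof (rule ccontr)
        assume "P y \<noteq> 0"
        then have "0 < P y" using P0[OF y] by linarith
        then have "Q y = 0" by (rule PQ[OF y])
        then show False using q th by simp
      qed
      then show False using Pvar[OF x y d] p small2 by simp
    qed
    have PorQ: "th \<le> P x \<or> th \<le> Q x" if xS: "x \<in> S" for x
    proof -
      have x: "x \<in> mspace X" using Sx[OF xS] .
      have s: "th \<le> P x + Q x" using xS incrG unfolding S_def by simp
      show ?thesis
      proof (cases "0 < P x")
        case True then show ?thesis using PQ[OF x True] s by simp
      next
        case False then show ?thesis using P0[OF x] s by simp
      qed
    qed
    have Eb: "El \<le> 2*(El + r + rho/3 + Ef)" using El r rho Ef by simp
    show "components_diam_le X r
          {x \<in> mspace X. tau + 2*dl \<le> max (W x) (h x) \<and> th \<le> incr (comb tau dl W h L Ow) c x}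
          (2*(El + r + rho/3 + Ef))"
      unfolding G_def[symmetric] S_def[symmetric] components_diam_le_def
    proof (intro ballI impI)
      fix x0 y assume x0S: "x0 \<in> S" and yS: "y \<in> S" and ch0: "r_chain X r S x0 y"
      have x0X: "x0 \<in> mspace X" using Sx[OF x0S] .
      show "mdist X x0 y \<le> 2*(El + r + rho/3 + Ef)"
      proof (cases "th \<le> P x0")
        case True
        have "th \<le> P z \<and> r_chain X r (T c) x0 z" if "r_chain X r S x0 z" for z
          using that
        proof (induction rule: r_chain_induct)
          case base then show ?case using True r_chain_refl[OF Ptype[OF x0S True]] by simp
        next
          case (step u v)
          have ru: "r_chain X r S x0 u" and vS: "v \<in> S" and duv: "mdist X u v \<le> r" using step by blast+
          have IH1: "th \<le> P u" and IH2: "r_chain X r (T c) x0 u" using step by blast+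
          have uS: "u \<in> S" using r_chain_mem[OF ru] by blast
          have pv: "th \<le> P v"
          proof (rule ccontr)
            assume "\<not> th \<le> P v"
            then have "th \<le> Q v" using PorQ[OF vS] by blast
            then show False using sep[OF uS vS duv IH1] by blast
          qed
          have "v \<in> T c" using Ptype[OF vS pv] .
          then have "r_chain X r (T c) x0 v" using r_chain_step[OF IH2 _ duv] by blast
          then show ?case using pv by simp
        qed
        then have "r_chain X r (T c) x0 y" using ch0 by blast
        then have "mdist X x0 y \<le> El" by (rule comp_diam[OF TC])
        then show ?thesis using Eb by linarith
      next
        case False
        then have q0: "th \<le> Q x0" using PorQ[OF x0S] by blast
        have inv0: "th \<le> Q z \<and> tt z = tt x0" if "r_chain X r S x0 z" for z
          using that
        proof (induction rule: r_chain_induct)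
          case base then show ?case using q0 by simp
        next
          case (step u v)
          have ru: "r_chain X r S x0 u" and vS: "v \<in> S" and duv: "mdist X u v \<le> r" using step by blast+
          have IH1: "th \<le> Q u" and IH2: "tt u = tt x0" using step by blast+
          have uS: "u \<in> S" using r_chain_mem[OF ru] by blast
          have qv: "th \<le> Q v"
          proof (rule ccontr)
            assume "\<not> th \<le> Q v"
            then have "th \<le> P v" using PorQ[OF vS] by blast
            moreover have "mdist X v u \<le> r" using duv by (simp add: mdist_commute)
            ultimately show False using sep[OF vS uS _ _ IH1] by blast
          qed
          have hu: "0 < h u" using Qtype[OF uS IH1] by blast
          have hv: "0 < h v" using Qtype[OF vS qv] by blast
          have "tt u = tt v" using tilecons[OF Sx[OF uS] Sx[OF vS] duv hu hv] .
          then show ?case using qv IH2 by simp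
        qed
        have c0: "c \<noteq> 0" and hx0: "0 < h x0" using Qtype[OF x0S q0] by auto
        define j where "j = c - 1"
        define U where "U = tt x0"
        define ownp where "ownp z \<longleftrightarrow> j \<le> m \<and> (\<exists>p\<in>Bp U j. mdist X z p < rho/3)" for z
        have ZownT: "ownp z \<or> z \<in> T j" if "r_chain X r S x0 z" for z
        proof -
          have zS: "z \<in> S" using r_chain_mem[OF that] by blast
          have "th \<le> Q z" "tt z = tt x0" using inv0[OF that] by auto
          then show ?thesis using Qtype[OF zS] unfolding ownp_def j_def U_def by metis
        qed
        show ?thesis
        proof (cases "\<exists>z1. r_chain X r S x0 z1 \<and> ownp z1")
          case True
          then obtain z1 where z1c: "r_chain X r S x0 z1" and z1o: "ownp z1" by blast
          have z1S: "z1 \<in> S" using r_chain_mem[OF z1c] by blast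
          from z1o obtain po where jm: "j \<le> m" and po: "po \<in> Bp U j" "mdist X z1 po < rho/3"
            unfolding ownp_def by blast
          have BpU: "Bp U j \<subseteq> mspace X" "components_diam_le X rho (Bp U j) Ef"
            using Bpprop[OF x0X hx0 jm] unfolding U_def by auto
          have poX: "po \<in> mspace X" using po(1) BpU(1) by blast
          define J where "J z \<longleftrightarrow> z \<in> mspace X \<and> (\<exists>p\<in>Bp U j. r_chain X rho (Bp U j) po p \<and> mdist X z p < rho/3)" for z
          define Inv where "Inv z \<longleftrightarrow> r_chain X r S x0 z \<and> (J z \<or> (z \<in> T j \<and> (\<exists>w q. J w \<and> q \<in> T j \<and> r_chain X r (T j) q z \<and> mdist X w q \<le> r)))" for z
          have rrho: "r \<le> rho/3" using small3 El r by linarith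
          have inv_all: "Inv z" if "r_chain X r S z1 z" for z
            using that
          proof (induction rule: r_chain_induct)
            case base
            have "J z1" unfolding J_def using Sx[OF z1S] po r_chain_refl[OF po(1)] by blast
            then show ?case using z1c by (simp add: Inv_def)
          next
            case (step u v)
            have IHu: "Inv u" and vS: "v \<in> S" and duv: "mdist X u v \<le> r" using step by blast+
            have ru: "r_chain X r S x0 u" using IHu by (simp add: Inv_def)
            have disj: "J u \<or> (u \<in> T j \<and> (\<exists>w q. J w \<and> q \<in> T j \<and> r_chain X r (T j) q u \<and> mdist X w q \<le> r))"
              using IHu by (simp add: Inv_def)
            have rv: "r_chain X r S x0 v" by (rule r_chain_step[OF ru vS duv])
            have uX: "u \<in> mspace X" using Sx r_chain_mem[OF ru] by blast
            have vX: "v \<in> mspace X" using Sx[OF vS] .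
            from ZownT[OF rv] show ?case
            proof
              assume "ownp v"
              then obtain p' where p': "p' \<in> Bp U j" "mdist X v p' < rho/3" unfolding ownp_def by blast
              have p'X: "p' \<in> mspace X" using p'(1) BpU(1) by blast
              have "J v"
              proof -
                from disj show ?thesis
                proof
                  assume "J u"
                  then obtain p where p: "p \<in> Bp U j" "r_chain X rho (Bp U j) po p" "mdist X u p < rho/3"
                    unfolding J_def by blast
                  have pX: "p \<in> mspace X" using p(1) BpU(1) by blast
                  have "mdist X p p' \<le> mdist X p u + mdist X u v + mdist X v p'"
                    by (rule tri4[OF pX uX vX p'X])
                  also have "\<dots> \<le> rho" using p(3) duv p'(2) rrho by (simp add: mdist_commute)
                  finally have "r_chain X rho (Bp U j) po p'" using r_chain_step[OF p(2) p'(1)] by blast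
                  then show "J v" unfolding J_def using vX p' by blast
                next
                  assume "u \<in> T j \<and> (\<exists>w q. J w \<and> q \<in> T j \<and> r_chain X r (T j) q u \<and> mdist X w q \<le> r)"
                  then obtain w q where Jw: "J w" and qT: "q \<in> T j" and rq: "r_chain X r (T j) q u" and wq: "mdist X w q \<le> r"
                    by blast
                  from Jw obtain pw where pw: "pw \<in> Bp U j" "r_chain X rho (Bp U j) po pw" "mdist X w pw < rho/3"
                    and wX: "w \<in> mspace X" unfolding J_def by blast
                  have pwX: "pw \<in> mspace X" using pw(1) BpU(1) by blast
                  have qX: "q \<in> mspace X" using qT unfolding T_def by blast
                  have qu: "mdist X q u \<le> El" by (rule comp_diam[OF TC rq])
                  have "mdist X pw p' \<le> mdist X pw w + mdist X w q + mdist X q u + mdist X u v + mdist X v p'"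
                    by (rule tri6[OF pwX wX qX uX vX p'X])
                  also have "\<dots> \<le> rho" using pw(3) wq qu duv p'(2) small3 by (simp add: mdist_commute)
                  finally have "r_chain X rho (Bp U j) po p'" using r_chain_step[OF pw(2) p'(1)] by blast
                  then show "J v" unfolding J_def using vX p' by blast
                qed
              qed
              then show ?case using rv by (simp add: Inv_def)
            next
              assume vT: "v \<in> T j"
              from disj show ?case
              proof
                assume Ju: "J u"
                have "r_chain X r (T j) v v" by (rule r_chain_refl[OF vT])
                then show ?case unfolding Inv_def using rv vT Ju duv by blast
              next
                assume "u \<in> T j \<and> (\<exists>w q. J w \<and> q \<in> T j \<and> r_chain X r (T j) q u \<and> mdist X w q \<le> r)"
                then obtain w q where Jw: "J w" and qT: "q \<in> T j" and rq: "r_chain X r (T j) q u" and wq: "mdist X w q \<le> r"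
                  by blast
                have "r_chain X r (T j) q v" by (rule r_chain_step[OF rq vT duv])
                then show ?case unfolding Inv_def using rv vT Jw qT wq by blast
              qed
            qed
          qed
          have bnd: "mdist X z po \<le> El + r + rho/3 + Ef" if iz: "Inv z" for z
          proof -
            have rz: "r_chain X r S x0 z" using iz by (simp add: Inv_def)
            have zX: "z \<in> mspace X" using Sx r_chain_mem[OF rz] by blast
            have disj: "J z \<or> (z \<in> T j \<and> (\<exists>w q. J w \<and> q \<in> T j \<and> r_chain X r (T j) q z \<and> mdist X w q \<le> r))"
              using iz by (simp add: Inv_def)
            then show ?thesis
            proof
              assume "J z"
              then obtain p where p: "p \<in> Bp U j" "r_chain X rho (Bp U j) po p" "mdist X z p < rho/3"
                unfolding J_def by blast
              have pX: "p \<in> mspace X" using p(1) BpU(1) by blast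
              have "mdist X po p \<le> Ef" by (rule comp_diam[OF BpU(2) p(2)])
              moreover have "mdist X z po \<le> mdist X z p + mdist X p po" by (rule mdist_triangle[OF zX pX poX])
              ultimately show ?thesis using p(3) El r by (simp add: mdist_commute)
            next
              assume "z \<in> T j \<and> (\<exists>w q. J w \<and> q \<in> T j \<and> r_chain X r (T j) q z \<and> mdist X w q \<le> r)"
              then obtain w q where Jw: "J w" and qT: "q \<in> T j" and rq: "r_chain X r (T j) q z" and wq: "mdist X w q \<le> r"
                by blast
              from Jw obtain pw where pw: "pw \<in> Bp U j" "r_chain X rho (Bp U j) po pw" "mdist X w pw < rho/3"
                and wX: "w \<in> mspace X" unfolding J_def by blast
              have pwX: "pw \<in> mspace X" using pw(1) BpU(1) by blast
              have qX: "q \<in> mspace X" using qT unfolding T_def by blast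
              have qz: "mdist X q z \<le> El" by (rule comp_diam[OF TC rq])
              have pp: "mdist X po pw \<le> Ef" by (rule comp_diam[OF BpU(2) pw(2)])
              have "mdist X z po \<le> mdist X z q + mdist X q w + mdist X w pw + mdist X pw po"
                by (rule tri5[OF zX qX wX pwX poX])
              then show ?thesis using qz wq pw(3) pp by (simp add: mdist_commute)
            qed
          qed
          have "Inv x0" using inv_all[OF r_chain_sym[OF z1c]] .
          moreover have "Inv y" using inv_all[OF r_chain_trans[OF r_chain_sym[OF z1c] ch0]] .
          ultimately have b1: "mdist X x0 po \<le> El + r + rho/3 + Ef" and b2: "mdist X y po \<le> El + r + rho/3 + Ef"
            using bnd by auto
          have yX: "y \<in> mspace X" using Sx[OF yS] .
          have "mdist X x0 y \<le> mdist X x0 po + mdist X po y" by (rule mdist_triangle[OF x0X poX yX])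
          then show ?thesis using b1 b2 by (simp add: mdist_commute)
        next
          case False
          then have nown: "\<not> ownp z" if "r_chain X r S x0 z" for z using that by blast
          have "r_chain X r (T j) x0 z" if "r_chain X r S x0 z" for z
            using that
          proof (induction rule: r_chain_induct)
            case base
            have "x0 \<in> T j" using ZownT[OF r_chain_refl[OF x0S]] nown[OF r_chain_refl[OF x0S]] by blast
            then show ?case by (rule r_chain_refl)
          next
            case (step u v)
            have ru: "r_chain X r S x0 u" and IHu: "r_chain X r (T j) x0 u" and vS: "v \<in> S" and duv: "mdist X u v \<le> r"
              using step by blast+
            have rv: "r_chain X r S x0 v" by (rule r_chain_step[OF ru vS duv])
            have "v \<in> T j" using ZownT[OF rv] nown[OF rv] by blast
            then show ?case by (rule r_chain_step[OF IHu _ duv])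
          qed
          then have "mdist X x0 y \<le> El" using comp_diam[OF TC] ch0 by blast
          then show ?thesis using Eb by linarith
        qed
      qed
    qed
  qed
qed

fun omax :: "'a metric \<Rightarrow> real \<Rightarrow> (nat \<Rightarrow> 'a set) \<Rightarrow> nat \<Rightarrow> 'a \<Rightarrow> real" where
  "omax X s B 0 x = bump X s (B 0) x"
| "omax X s B (Suc j) x = max (omax X s B j x) (bump X s (B (Suc j)) x)"

definition ocum :: "'a metric \<Rightarrow> real \<Rightarrow> nat \<Rightarrow> (nat \<Rightarrow> 'a set) \<Rightarrow> nat \<Rightarrow> 'a \<Rightarrow> real" where
  "ocum X s m B j x = (if m \<le> j then 1 else omax X s B j x)"

lemma omax_01: "s > 0 \<Longrightarrow> 0 \<le> omax X s B j x \<and> omax X s B j x \<le> 1"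
  by (induction j) (auto simp: bump_ge0 bump_le1 le_max_iff_disj)

lemma omax_ge: "i \<le> j \<Longrightarrow> bump X s (B i) x \<le> omax X s B j x"
proof (induction j)
  case 0 then show ?case by simp
next
  case (Suc j)
  show ?case
  proof (cases "i = Suc j")
    case True then show ?thesis by simp
  next
    case False then have "i \<le> j" using Suc.prems by simp
    then show ?thesis using Suc.IH by (simp add: le_max_iff_disj)
  qed
qed

lemma omax_lip:
  assumes s: "s > 0" and B: "\<And>i. i \<le> j \<Longrightarrow> B i \<subseteq> mspace X" and x: "x \<in> mspace X" and y: "y \<in> mspace X"
  shows "\<bar>omax X s B j x - omax X s B j y\<bar> \<le> mdist X x y / s"
  using B
proof (induction j)
  case 0 then show ?case using bump_lip[OF s _ x y] by simp
next
  case (Suc j)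
  have h1: "\<bar>omax X s B j x - omax X s B j y\<bar> \<le> mdist X x y / s" using Suc by simp
  have h2: "\<bar>bump X s (B (Suc j)) x - bump X s (B (Suc j)) y\<bar> \<le> mdist X x y / s"
    using bump_lip[OF s Suc.prems[of "Suc j"] x y] by simp
  have "max \<bar>omax X s B j x - omax X s B j y\<bar> \<bar>bump X s (B (Suc j)) x - bump X s (B (Suc j)) y\<bar> \<le> mdist X x y / s"
    by (rule max.boundedI[OF h1 h2])
  then show ?case using order_trans[OF max_lip[of "omax X s B j x" "bump X s (B (Suc j)) x" "omax X s B j y" "bump X s (B (Suc j)) y"]]
    by simp
qed

lemma ocum_01: "s > 0 \<Longrightarrow> 0 \<le> ocum X s m B j x \<and> ocum X s m B j x \<le> 1"
  using omax_01[of s X B j x] by (simp add: ocum_def)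

lemma ocum_mono: "s > 0 \<Longrightarrow> ocum X s m B j x \<le> ocum X s m B (Suc j) x"
  using omax_01[of s X B j x] by (auto simp: ocum_def)

lemma ocum_top: "m \<le> j \<Longrightarrow> ocum X s m B j x = 1"
  by (simp add: ocum_def)

lemma ocum_lip:
  assumes s: "s > 0" and B: "\<And>i. i < m \<Longrightarrow> B i \<subseteq> mspace X" and x: "x \<in> mspace X" and y: "y \<in> mspace X"
  shows "\<bar>ocum X s m B j x - ocum X s m B j y\<bar> \<le> mdist X x y / s"
proof (cases "m \<le> j")
  case True then show ?thesis using s by (simp add: ocum_def)
next
  case False
  then have "\<And>i. i \<le> j \<Longrightarrow> B i \<subseteq> mspace X" using B by simp
  then show ?thesis using omax_lip[OF s _ x y] False by (simp add: ocum_def)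
qed

lemma ocum_near:
  assumes s: "s > 0" and x: "x \<in> mspace X" and xB: "x \<in> (\<Union>i\<le>m. B i)"
    and pos: "0 < incr (ocum X s m B) j x"
  shows "j \<le> m \<and> (\<exists>p\<in>B j. mdist X x p < s)"
proof -
  have jm: "j \<le> m"
  proof (rule ccontr)
    assume "\<not> j \<le> m"
    then have "ocum X s m B j x = 1" "ocum X s m B (j - 1) x = 1" by (simp_all add: ocum_def)
    then show False using pos \<open>\<not> j \<le> m\<close> by (simp add: incr_def)
  qed
  have d0: "mdist X x x < s" using mdist_zero[OF x x] s by simp
  show ?thesis
  proof (cases j)
    case 0
    show ?thesis
    proof (cases "m = 0")
      case True
      then have "x \<in> B 0" using xB by simp
      then show ?thesis using 0 d0 by auto
    next
      case False
      then have "0 < bump X s (B 0) x" using pos 0 by (simp add: incr_def ocum_def)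
      then show ?thesis using bump_pos[OF s] 0 by auto
    qed
  next
    case (Suc j')
    show ?thesis
    proof (cases "j = m")
      case True
      have "omax X s B j' x < 1" using pos Suc True by (simp add: incr_def ocum_def)
      then have "x \<notin> B i" if "i \<le> j'" for i
        using omax_ge[OF that, of X s B x] bump_one[OF s _ x, of "B i"] by auto
      then have "x \<in> B j" using xB Suc True by (auto simp: le_Suc_eq)
      then show ?thesis using jm d0 by auto
    next
      case False
      then have "j < m" using jm by simp
      then have "0 < max (omax X s B j' x) (bump X s (B j) x) - omax X s B j' x"
        using pos Suc by (simp add: incr_def ocum_def)
      then have "0 < bump X s (B j) x" using omax_01[OF s, of X B j' x] by (simp add: max_def split: if_splits)
      then show ?thesis using bump_pos[OF s] jm by auto
    qed
  qed
qed

fun wl :: "(nat \<Rightarrow> 'a \<Rightarrow> real) \<Rightarrow> nat \<Rightarrow> 'a \<Rightarrow> real" where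
  "wl hb 0 x = 0"
| "wl hb (Suc k) x = max (wl hb k x) (hb k x)"

fun sys :: "real \<Rightarrow> (nat \<Rightarrow> 'a \<Rightarrow> real) \<Rightarrow> (nat \<Rightarrow> nat \<Rightarrow> 'a \<Rightarrow> real) \<Rightarrow> nat \<Rightarrow> nat \<Rightarrow> 'a \<Rightarrow> real" where
  "sys dl hb Ow 0 = (\<lambda>c x. 1)"
| "sys dl hb Ow (Suc k) = comb ((2 * real k + 1) * dl) dl (wl hb k) (hb k) (sys dl hb Ow k) (Ow k)"

fun Eseq :: "real \<Rightarrow> real \<Rightarrow> real \<Rightarrow> real \<Rightarrow> (real \<Rightarrow> real) \<Rightarrow> nat \<Rightarrow> real \<Rightarrow> real" where
  "Eseq e0 aF bF cF Dt 0 r = 0"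
| "Eseq e0 aF bF cF Dt (Suc k) r =
     2 * (Eseq e0 aF bF cF Dt k r + r + (3*r/e0 + 3 * Eseq e0 aF bF cF Dt k r + 6*r) / 3
       + (aF * (3*r/e0 + 3 * Eseq e0 aF bF cF Dt k r + 6*r) + bF * Dt r + cF))"

definition aff :: "(real \<Rightarrow> real) \<Rightarrow> bool" where
  "aff F \<longleftrightarrow> (\<exists>p q. 0 \<le> p \<and> 0 \<le> q \<and> (\<forall>r. F r = p * r + q))"

lemma Eseq_aff:
  assumes e0: "e0 > 0" and ab: "0 \<le> aF" "0 \<le> bF" "0 \<le> cF" and D: "aff Dt"
  shows "aff (Eseq e0 aF bF cF Dt k)"
proof (induction k)
  case 0 then show ?case unfolding aff_def by (intro exI[of _ 0]) simp
next
  case (Suc k)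
  obtain p q where pq: "0 \<le> p" "0 \<le> q" "\<And>r. Eseq e0 aF bF cF Dt k r = p * r + q"
    using Suc unfolding aff_def by blast
  obtain p' q' where pq': "0 \<le> p'" "0 \<le> q'" "\<And>r. Dt r = p' * r + q'"
    using D unfolding aff_def by blast
  define P where "P = 2 * (p + 1 + (3/e0 + 3*p + 6)/3 + aF * (3/e0 + 3*p + 6) + bF * p')"
  define Q where "Q = 2 * (q + q + aF * (3*q) + bF * q' + cF)"
  have "0 \<le> P" unfolding P_def using pq pq' ab e0 by simp
  moreover have "0 \<le> Q" unfolding Q_def using pq pq' ab by simp
  moreover have "Eseq e0 aF bF cF Dt (Suc k) r = P * r + Q" for r
    unfolding P_def Q_def using e0 by (simp add: pq pq' field_simps)
  ultimately show ?case unfolding aff_def by blast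
qed

lemma Eseq_nonneg:
  assumes "e0 > 0" "0 \<le> aF" "0 \<le> bF" "0 \<le> cF" "0 \<le> Dt r" "0 \<le> r"
  shows "0 \<le> Eseq e0 aF bF cF Dt k r"
  by (induction k) (use assms in auto)

lemma comp_empty: "components_diam_le X r {} D"
  unfolding components_diam_le_def by blast

lemma construction:
  fixes X :: "'a metric" and Y :: "'b metric" and f :: "'a \<Rightarrow> 'b"
  assumes fXY: "f ` mspace X \<subseteq> mspace Y"
    and aL: "0 \<le> aL" and bL: "0 \<le> bL"
    and lip: "\<And>x y. x \<in> mspace X \<Longrightarrow> y \<in> mspace X \<Longrightarrow> mdist Y (f x) (f y) \<le> aL * mdist X x y + bL"
    and cY: "0 \<le> cY" and bY: "0 \<le> bY" and ctlY: "control_fun Y n (\<lambda>R. cY * R + bY)"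
    and aF: "0 \<le> aF" and bF: "0 \<le> bF" and cF: "0 \<le> cF"
    and ctlf: "fun_control_fun X Y f m (\<lambda>r R. aF * r + bF * R + cF)"
    and e0def: "e0 = (1 / (real (m + n) + 1)) * (1 / (2 * real n + 3)) / (20 * 2 ^ n)"
    and Rfdef: "Rf = (\<lambda>r. 3 * (aL * r + bL) / e0 + r)"
    and Dtdef: "Dtf = (\<lambda>r. cY * Rf r + bY + 2 * Rf r / 3)"
    and r: "0 < r"
  shows "\<exists>U. (\<forall>i\<le>m+n. r_disjoint X r (U i) \<and>
              (\<forall>A\<in>U i. A \<subseteq> mspace X \<and> diam_le X A (Eseq e0 aF bF cF Dtf (Suc n) r)))
          \<and> mspace X \<subseteq> (\<Union>i\<le>m+n. \<Union>(U i))"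
proof -
  define th where "th = 1 / (real (m + n) + 1)"
  define dl where "dl = 1 / (2 * real n + 3)"
  have th0: "0 < th" "th \<le> 1" unfolding th_def by auto
  have dl0: "0 < dl" "dl \<le> 1" unfolding dl_def by auto
  have e0th: "e0 = th * dl / (20 * 2^n)" unfolding e0def th_def dl_def by simp
  have e00: "0 < e0" unfolding e0th using th0 dl0 by simp
  have e0dl: "e0 / dl = th / (20 * 2^n)" unfolding e0th using dl0 by (simp add: field_simps)
  have e0lt: "e0 < dl"
  proof -
    have "e0 / dl < 1" unfolding e0dl using th0 by (simp add: field_simps) (smt (verit) one_le_power)
    then show ?thesis using dl0 by (simp add: divide_less_eq)
  qed
  have e0le: "e0 \<le> e0 / dl" using e00 dl0 by (simp add: le_divide_eq mult_le_cancel_left1)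
  define R where "R = Rf r"
  have Req: "R = 3 * (aL * r + bL) / e0 + r" unfolding R_def Rfdef by simp
  have alr: "0 \<le> aL * r + bL" using aL bL r by simp
  have "0 \<le> 3 * (aL * r + bL) / e0" using alr e00 by simp
  then have R0: "0 < R" unfolding Req using r by linarith
  have Rbig: "aL * r + bL \<le> e0 * (R/3)"
  proof -
    have "e0 * (R/3) = (aL * r + bL) + e0 * r / 3" unfolding Req using e00 by (simp add: field_simps)
    then show ?thesis using e00 r by simp
  qed
  have Rbig2: "aL * r + bL < R/3"
  proof -
    have "(aL * r + bL) * e0 \<le> aL * r + bL" by (rule mult_left_le) (use e0lt dl0 alr in auto)
    then have "aL * r + bL \<le> (aL * r + bL) / e0" using e00 by (simp add: le_divide_eq)
    moreover have "R / 3 = (aL * r + bL) / e0 + r / 3" unfolding Req by (simp add: field_simps)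
    ultimately show ?thesis using r by linarith
  qed
  define Dt where "Dt = Dtf r"
  have Dteq: "Dt = cY * R + bY + 2 * R / 3" unfolding Dt_def Dtdef R_def by simp
  have "0 \<le> cY * R" using cY R0 by simp
  then have Dt0: "0 < Dt" unfolding Dteq using bY R0 by linarith
  obtain Ub where Ub: "\<forall>i\<le>n. r_disjoint Y R (Ub i) \<and> (\<forall>A\<in>Ub i. A \<subseteq> mspace Y \<and> diam_le Y A (cY * R + bY))"
    and cov: "mspace Y \<subseteq> (\<Union>i\<le>n. \<Union>(Ub i))"
  proof -
    have "\<exists>U. (\<forall>i\<le>n. r_disjoint Y R (U i) \<and> (\<forall>A\<in>U i. A \<subseteq> mspace Y \<and> diam_le Y A (cY * R + bY)))
        \<and> mspace Y \<subseteq> (\<Union>i\<le>n. \<Union>(U i))"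
      using ctlY[unfolded control_fun_def, rule_format, OF R0] by simp
    then show ?thesis using that by blast
  qed
  define hb where "hb k x = bump Y (R/3) (\<Union>(Ub k)) (f x)" for k x
  define tt where "tt k x = (SOME U. U \<in> Ub k \<and> (\<exists>u\<in>U. mdist Y (f x) u < R/3))" for k x
  define E where "E k = Eseq e0 aF bF cF Dtf k r" for k
  define rho where "rho k = 3*r/e0 + 3 * E k + 6*r" for k
  define Ef where "Ef k = aF * rho k + bF * Dt + cF" for k
  define AU where "AU U = {x \<in> mspace X. \<exists>u\<in>U. mdist Y (f x) u < R/3}" for U
  define Bp where "Bp k U = (SOME B. AU U = (\<Union>i\<le>m. B i) \<and> (\<forall>i\<le>m. components_diam_le X (rho k) (B i) (Ef k)))" for k U
  define Ow where "Ow k j x = (if 0 < hb k x then ocum X (rho k / 3) m (Bp k (tt k x)) j x else 1)" for k j x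
  define V where "V k = (2 ^ k - 1) * (5 * e0 / dl)" for k :: nat
  define S where "S = sys dl hb Ow"
  have E0: "0 \<le> E k" for k unfolding E_def
    by (rule Eseq_nonneg) (use e00 aF bF cF Dt0 r in \<open>auto simp: Dt_def\<close>)
  have r3e: "0 \<le> 3 * r / e0" using r e00 by simp
  have rho0: "0 < rho k" for k unfolding rho_def using E0[of k] r3e r by linarith
  have Ef0: "0 \<le> Ef k" for k unfolding Ef_def
    using mult_nonneg_nonneg[OF aF less_imp_le[OF rho0[of k]]] mult_nonneg_nonneg[OF bF less_imp_le[OF Dt0]] cF by linarith
  have Esuc: "E (Suc k) = 2 * (E k + r + rho k / 3 + Ef k)" for k
    unfolding E_def rho_def Ef_def Dt_def by simp
  have rho3: "3 * r / rho k \<le> e0" for k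
  proof -
    have "3 * r / e0 \<le> rho k" unfolding rho_def using E0[of k] r by linarith
    then have "3 * r \<le> e0 * rho k" using e00 by (simp add: divide_le_eq mult.commute)
    then show ?thesis using rho0[of k] by (simp add: divide_le_eq mult.commute)
  qed
  have UbY: "\<Union>(Ub k) \<subseteq> mspace Y" if "k \<le> n" for k using Ub that by blast
  have hb01: "0 \<le> hb k x \<and> hb k x \<le> 1" for k x
  proof -
    have R3: "0 < R / 3" using R0 by simp
    show ?thesis unfolding hb_def by (rule conjI[OF bump_ge0[OF R3] bump_le1[OF R3]])
  qed
  have fX: "f x \<in> mspace Y" if "x \<in> mspace X" for x using fXY that by blast
  have hbvar: "\<bar>hb k x - hb k y\<bar> \<le> e0" if k: "k \<le> n" and xy: "x \<in> mspace X" "y \<in> mspace X" "mdist X x y \<le> r" for k x y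
  proof -
    have R3: "0 < R / 3" using R0 by simp
    have "\<bar>hb k x - hb k y\<bar> \<le> mdist Y (f x) (f y) / (R/3)"
      unfolding hb_def by (rule bump_lip[OF R3 UbY[OF k] fX[OF xy(1)] fX[OF xy(2)]])
    also have "\<dots> \<le> (aL * r + bL) / (R/3)"
    proof -
      have "mdist Y (f x) (f y) \<le> aL * mdist X x y + bL" by (rule lip[OF xy(1,2)])
      also have "\<dots> \<le> aL * r + bL" using xy(3) aL by (simp add: mult_left_mono)
      finally show ?thesis using R3 by (simp add: divide_right_mono)
    qed
    also have "\<dots> \<le> e0" using Rbig R3 by (simp add: divide_le_eq)
    finally show ?thesis .
  qed
  have wlvar: "\<bar>wl hb k x - wl hb k y\<bar> \<le> e0" if k: "k \<le> Suc n" and xy: "x \<in> mspace X" "y \<in> mspace X" "mdist X x y \<le> r" for k x y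
    using k
  proof (induction k)
    case 0 then show ?case using e00 by simp
  next
    case (Suc k)
    have h1: "\<bar>wl hb k x - wl hb k y\<bar> \<le> e0" using Suc by simp
    have h2: "\<bar>hb k x - hb k y\<bar> \<le> e0" using hbvar[OF _ xy] Suc.prems by simp
    have "max \<bar>wl hb k x - wl hb k y\<bar> \<bar>hb k x - hb k y\<bar> \<le> e0" by (rule max.boundedI[OF h1 h2])
    then show ?case using order_trans[OF max_lip[of "wl hb k x" "hb k x" "wl hb k y" "hb k y"]] by simp
  qed
  have wl_le1: "wl hb k x \<le> 1" for k x
    by (induction k) (use hb01 in auto)
  have wl_ge: "hb i x \<le> wl hb k x" if "i < k" for i k x
    using that
  proof (induction k)
    case 0 then show ?case by simp
  next
    case (Suc k) then show ?case by (cases "i = k") (auto simp: le_max_iff_disj)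
  qed
  have wl_top: "wl hb (Suc n) x = 1" if x: "x \<in> mspace X" for x
  proof -
    obtain i where i: "i \<le> n" "f x \<in> \<Union>(Ub i)" using cov fX[OF x] by blast
    have "hb i x = 1" unfolding hb_def by (rule bump_one) (use R0 i fX[OF x] in auto)
    then have g1: "1 \<le> wl hb (Suc n) x" using wl_ge[of i "Suc n" x] i(1) by simp
    show ?thesis by (rule order_antisym[OF wl_le1 g1])
  qed
  have tt_spec: "tt k x \<in> Ub k \<and> (\<exists>u\<in>tt k x. mdist Y (f x) u < R/3)" if hx: "0 < hb k x" for k x
  proof -
    have R3: "0 < R / 3" using R0 by simp
    obtain p where "p \<in> \<Union>(Ub k)" "mdist Y (f x) p < R/3" using bump_pos[OF R3 hx[unfolded hb_def]] by blast
    then have ex: "\<exists>U. U \<in> Ub k \<and> (\<exists>u\<in>U. mdist Y (f x) u < R/3)" by blast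
    show ?thesis unfolding tt_def by (rule someI_ex[OF ex])
  qed
  have tilecons: "tt k x = tt k y" if k: "k \<le> n" and xy: "x \<in> mspace X" "y \<in> mspace X" "mdist X x y \<le> r"
    and hx: "0 < hb k x" and hy: "0 < hb k y" for k x y
  proof (rule ccontr)
    assume ne: "tt k x \<noteq> tt k y"
    obtain u1 where u1: "u1 \<in> tt k x" "mdist Y (f x) u1 < R/3" using tt_spec[OF hx] by blast
    obtain u2 where u2: "u2 \<in> tt k y" "mdist Y (f y) u2 < R/3" using tt_spec[OF hy] by blast
    have inU: "tt k x \<in> Ub k" "tt k y \<in> Ub k" using tt_spec[OF hx] tt_spec[OF hy] by auto
    have rd: "r_disjoint Y R (Ub k)" using Ub k by blast
    have "R \<le> mdist Y u1 u2" using rd inU ne u1(1) u2(1) unfolding r_disjoint_def by blast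
    moreover have u1Y: "u1 \<in> mspace Y" and u2Y: "u2 \<in> mspace Y" using Ub k inU u1 u2 by blast+
    have "mdist Y u1 u2 \<le> mdist Y u1 (f x) + mdist Y (f x) (f y) + mdist Y (f y) u2"
      by (rule tri4[OF u1Y fX[OF xy(1)] fX[OF xy(2)] u2Y])
    moreover have "mdist Y (f x) (f y) \<le> aL * r + bL"
    proof -
      have "mdist Y (f x) (f y) \<le> aL * mdist X x y + bL" by (rule lip[OF xy(1,2)])
      also have "\<dots> \<le> aL * r + bL" using xy(3) aL by (simp add: mult_left_mono)
      finally show ?thesis .
    qed
    ultimately show False using u1(2) u2(2) Rbig2 by (simp add: mdist_commute)
  qed
  have AUsub: "AU U \<subseteq> mspace X" for U unfolding AU_def by blast
  have AUdiam: "diam_le Y (f ` AU U) Dt" if k: "k \<le> n" and U: "U \<in> Ub k" for k U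
    unfolding diam_le_def
  proof (intro ballI)
    fix y1 y2 assume y1: "y1 \<in> f ` AU U" and y2: "y2 \<in> f ` AU U"
    then obtain x1 x2 where x1: "x1 \<in> AU U" "y1 = f x1" and x2: "x2 \<in> AU U" "y2 = f x2" by blast
    obtain u1 where u1: "u1 \<in> U" "mdist Y (f x1) u1 < R/3" using x1 unfolding AU_def by blast
    obtain u2 where u2: "u2 \<in> U" "mdist Y (f x2) u2 < R/3" using x2 unfolding AU_def by blast
    have UY: "U \<subseteq> mspace Y" and dU: "diam_le Y U (cY * R + bY)" using Ub k U by blast+
    have x1X: "x1 \<in> mspace X" and x2X: "x2 \<in> mspace X" using x1 x2 AUsub by blast+
    have "mdist Y (f x1) (f x2) \<le> mdist Y (f x1) u1 + mdist Y u1 u2 + mdist Y u2 (f x2)"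
      by (rule tri4[OF fX[OF x1X] _ _ fX[OF x2X]]) (use UY u1 u2 in auto)
    moreover have "mdist Y u1 u2 \<le> cY * R + bY" using dU u1(1) u2(1) unfolding diam_le_def by simp
    moreover have "mdist Y u2 (f x2) < R/3" using u2(2) by (simp add: mdist_commute)
    ultimately show "mdist Y y1 y2 \<le> Dt" using u1(2) unfolding Dteq x1(2) x2(2) by linarith
  qed
  have Bp_spec: "AU U = (\<Union>i\<le>m. Bp k U i) \<and> (\<forall>i\<le>m. components_diam_le X (rho k) (Bp k U i) (Ef k))"
    if k: "k \<le> n" and U: "U \<in> Ub k" for k U
  proof -
    have ex: "\<exists>B. AU U = (\<Union>i\<le>m. B i) \<and> (\<forall>i\<le>m. components_diam_le X (rho k) (B i) (Ef k))"
      using ctlf[unfolded fun_control_fun_def, rule_format, OF rho0[of k] Dt0 AUsub[of U] AUdiam[OF k U]]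
      unfolding Ef_def by simp
    show ?thesis unfolding Bp_def by (rule someI_ex[OF ex])
  qed
  have xAU: "x \<in> AU (tt k x)" if "x \<in> mspace X" "0 < hb k x" for k x
    using tt_spec[OF that(2)] that(1) unfolding AU_def by blast
  have AUeq: "AU (tt k x) = (\<Union>i\<le>m. Bp k (tt k x) i)" if "k \<le> n" "0 < hb k x" for k x
    using Bp_spec[OF that(1) conjunct1[OF tt_spec[OF that(2)]]] by (rule conjunct1)
  have AUcomp: "components_diam_le X (rho k) (Bp k (tt k x) i) (Ef k)" if "k \<le> n" "0 < hb k x" "i \<le> m" for k x i
    using Bp_spec[OF that(1) conjunct1[OF tt_spec[OF that(2)]]] that(3) by blast
  have BpX: "Bp k (tt k x) i \<subseteq> mspace X" if "k \<le> n" "0 < hb k x" "i \<le> m" for k x i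
  proof -
    have "Bp k (tt k x) i \<subseteq> AU (tt k x)" unfolding AUeq[OF that(1,2)] using that(3) by auto
    then show ?thesis using AUsub[of "tt k x"] by (rule subset_trans)
  qed
  define Inv where "Inv k \<longleftrightarrow>
      (\<forall>c x. x \<in> mspace X \<longrightarrow> 0 \<le> S k c x \<and> S k c x \<le> 1) \<and>
      (\<forall>c x. x \<in> mspace X \<longrightarrow> S k c x \<le> S k (Suc c) x) \<and>
      (\<forall>c x. x \<in> mspace X \<longrightarrow> m + k \<le> c \<longrightarrow> S k c x = 1) \<and>
      (\<forall>c x y. x \<in> mspace X \<longrightarrow> y \<in> mspace X \<longrightarrow> mdist X x y \<le> r \<longrightarrow> \<bar>S k c x - S k c y\<bar> \<le> V k) \<and>
      (\<forall>c. components_diam_le X r {x \<in> mspace X. (2 * real k + 1) * dl \<le> wl hb k x \<and> th \<le> incr (S k) c x} (E k)) \<and>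
      (0 < k \<longrightarrow> (\<forall>x. x \<in> mspace X \<longrightarrow> S k 0 x = 0))" for k
  have V0: "0 \<le> V k" for k unfolding V_def using e00 dl0 by simp
  have Vn: "V k \<le> (2 ^ n - 1) * (5 * e0 / dl)" if "k \<le> n" for k
  proof -
    have "(2::real) ^ k \<le> 2 ^ n" using that by (simp add: power_increasing)
    then have pk: "(2::real) ^ k - 1 \<le> 2 ^ n - 1" by simp
    have C: "0 \<le> 5 * e0 / dl" using e00 dl0 by simp
    show ?thesis unfolding V_def by (rule mult_right_mono[OF pk C])
  qed
  have small2: "2 * (e0 / dl + V k) < th" if "k \<le> n" for k
  proof -
    have p1: "(1::real) \<le> 2 ^ n" by simp
    have "2 * (e0 / dl + V k) \<le> 2 * (e0 / dl + (2 ^ n - 1) * (5 * e0 / dl))" using Vn[OF that] by simp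
    also have "\<dots> = (e0 / dl) * (10 * 2^n - 8)" using dl0 by (simp add: field_simps)
    also have "\<dots> = (th / (20 * 2^n)) * (10 * 2^n - 8)" unfolding e0dl ..
    also have "\<dots> < th"
    proof -
      have d20: "0 < (20::real) * 2^n" by simp
      have "(10 * 2^n - 8) < (1::real) * (20 * 2^n)" using p1 by linarith
      then have "(10 * 2^n - 8) / (20 * 2^n) < (1::real)" using d20 by (simp only: divide_less_eq) simp
      then have "th * ((10 * 2^n - 8) / (20 * 2^n)) < th * 1" using th0 by (intro mult_strict_left_mono) auto
      then show ?thesis by (simp add: field_simps)
    qed
    finally show ?thesis .
  qed
  have InvAll: "Inv k" if "k \<le> Suc n" for k
    using that
  proof (induction k)
    case 0
    have emp: "{x \<in> mspace X. (2 * real 0 + 1) * dl \<le> wl hb 0 x \<and> th \<le> incr (S 0) c x} = {}" for c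
      using dl0 by auto
    show ?case unfolding Inv_def emp by (simp add: S_def V_def comp_empty)
  next
    case (Suc k)
    have kn: "k \<le> n" using Suc.prems by simp
    have IH: "Inv k" using Suc by simp
    have I1: "\<And>c x. x \<in> mspace X \<Longrightarrow> 0 \<le> S k c x \<and> S k c x \<le> 1"
      and I2: "\<And>c x. x \<in> mspace X \<Longrightarrow> S k c x \<le> S k (Suc c) x"
      and I3: "\<And>c x. x \<in> mspace X \<Longrightarrow> m + k \<le> c \<Longrightarrow> S k c x = 1"
      and I4: "\<And>c x y. x \<in> mspace X \<Longrightarrow> y \<in> mspace X \<Longrightarrow> mdist X x y \<le> r \<Longrightarrow> \<bar>S k c x - S k c y\<bar> \<le> V k"
      and I5: "\<And>c. components_diam_le X r {x \<in> mspace X. (2 * real k + 1) * dl \<le> wl hb k x \<and> th \<le> incr (S k) c x} (E k)"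
      and I6: "0 < k \<Longrightarrow> (\<And>x. x \<in> mspace X \<Longrightarrow> S k 0 x = 0)"
      using IH unfolding Inv_def by auto
    have I6': "S k 0 x = 0" if "x \<in> mspace X" "(2 * real k + 1) * dl < wl hb k x" for x
    proof (cases k)
      case 0 then show ?thesis using that dl0 by simp
    next
      case (Suc k') then show ?thesis using I6 that by simp
    qed
    have s3: "3 > (0::real)" by simp
    have sk: "0 < rho k / 3" using rho0[of k] by simp
    have O01: "0 \<le> Ow k j x \<and> Ow k j x \<le> 1" for j x
    proof (cases "0 < hb k x")
      case True then show ?thesis unfolding Ow_def using ocum_01[OF sk, of X m "Bp k (tt k x)" j x] by simp
    next
      case False then show ?thesis unfolding Ow_def by simp
    qed
    have Omono: "Ow k j x \<le> Ow k (Suc j) x" for j x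
    proof (cases "0 < hb k x")
      case True then show ?thesis unfolding Ow_def using ocum_mono[OF sk, of X m "Bp k (tt k x)" j x] by simp
    next
      case False then show ?thesis unfolding Ow_def by simp
    qed
    have Otop: "Ow k j x = 1" if "m \<le> j" for j x
      unfolding Ow_def using ocum_top[OF that, of X "rho k / 3" "Bp k (tt k x)" x] by simp
    have Ovar: "\<bar>Ow k j x - Ow k j y\<bar> \<le> e0"
      if xy: "x \<in> mspace X" "y \<in> mspace X" "mdist X x y \<le> r" and hx: "0 < hb k x" and hy: "0 < hb k y" for j x y
    proof -
      have tte: "tt k y = tt k x" using tilecons[OF kn xy hx hy] by simp
      have BX: "Bp k (tt k x) i \<subseteq> mspace X" if "i < m" for i
        using BpX[OF kn hx] that by simp
      have s: "0 < rho k / 3" using rho0[of k] by simp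
      have "\<bar>Ow k j x - Ow k j y\<bar> \<le> mdist X x y / (rho k / 3)"
        unfolding Ow_def using hx hy tte ocum_lip[OF s BX xy(1) xy(2)] by simp
      also have "\<dots> \<le> r / (rho k / 3)" using xy(3) s by (simp add: divide_right_mono)
      also have "\<dots> = 3 * r / rho k" by simp
      also have "\<dots> \<le> e0" by (rule rho3)
      finally show ?thesis .
    qed
    have Onear: "j \<le> m \<and> (\<exists>p\<in>Bp k (tt k x) j. mdist X x p < rho k / 3)"
      if x: "x \<in> mspace X" and hx: "0 < hb k x" and pos: "0 < incr (Ow k) j x" for j x
    proof -
      have s: "0 < rho k / 3" using rho0[of k] by simp
      have eqi: "incr (Ow k) j x = incr (ocum X (rho k / 3) m (Bp k (tt k x))) j x"
        unfolding incr_def Ow_def using hx by simp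
      have xB: "x \<in> (\<Union>i\<le>m. Bp k (tt k x) i)"
        using xAU[OF x hx] unfolding AUeq[OF kn hx] .
      have "0 < incr (ocum X (rho k / 3) m (Bp k (tt k x))) j x" using pos unfolding eqi .
      then show ?thesis by (rule ocum_near[OF s x xB])
    qed
    have Bpprop: "Bp k (tt k x) j \<subseteq> mspace X \<and> components_diam_le X (rho k) (Bp k (tt k x) j) (Ef k)"
      if x: "x \<in> mspace X" and hx: "0 < hb k x" and jm: "j \<le> m" for x j
      using BpX[OF kn hx jm] AUcomp[OF kn hx jm] by blast
    have tau0: "0 \<le> (2 * real k + 1) * dl" using dl0 by simp
    have small3: "E k + 2*r \<le> rho k / 3"
    proof -
      have "rho k / 3 = r / e0 + E k + 2*r" unfolding rho_def by (simp add: field_simps)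
      moreover have "0 \<le> r / e0" using r e00 by simp
      ultimately show ?thesis by linarith
    qed
    note stI = stage[where X=X and r=r and th=th and dl=dl and tau="(2 * real k + 1) * dl" and rho="rho k"
        and El="E k" and Ef="Ef k" and m=m and M="m + k" and v="V k" and eps=e0 and w=e0
        and L="S k" and Ow="Ow k" and W="wl hb k" and h="hb k" and tt="tt k" and Bp="Bp k"]
    note FS = r th0(1) dl0(1) tau0 rho0 E0 Ef0 le_add1 V0 less_imp_le[OF e00]
           I1 I2 I3 I4 I5 I6' wlvar[OF le_SucI[OF kn]] hbvar[OF kn] O01 Omono Otop Ovar Onear
           tilecons[OF kn] Bpprop e0lt small2[OF kn] small3
    have Seq: "S (Suc k) = comb ((2 * real k + 1) * dl) dl (wl hb k) (hb k) (S k) (Ow k)"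
      unfolding S_def by simp
    have tauS: "(2 * real k + 1) * dl + 2 * dl = (2 * real (Suc k) + 1) * dl" by (simp add: algebra_simps)
    have wlS: "max (wl hb k x) (hb k x) = wl hb (Suc k) x" for x by simp
    have Vs: "4 * e0 / dl + 2 * V k + e0 \<le> V (Suc k)"
    proof -
      have eq1: "4 * e0 / dl + 2 * V k + e0 = 10 * (2^k * (e0/dl)) - 6*(e0/dl) + e0"
        unfolding V_def using dl0 by (simp add: field_simps)
      have eq2: "V (Suc k) = 10 * (2^k * (e0/dl)) - 5*(e0/dl)"
        unfolding V_def using dl0 by (simp add: field_simps)
      show ?thesis unfolding eq1 eq2 using e0le by linarith
    qed
    have h1: "\<And>c x. x \<in> mspace X \<Longrightarrow> 0 \<le> S (Suc k) c x \<and> S (Suc k) c x \<le> 1"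
      unfolding Seq by (rule stI(1)) (rule FS | assumption)+
    have h2: "\<And>c x. x \<in> mspace X \<Longrightarrow> S (Suc k) c x \<le> S (Suc k) (Suc c) x"
      unfolding Seq by (rule stI(2)) (rule FS | assumption)+
    have h3: "\<And>c x. x \<in> mspace X \<Longrightarrow> Suc (m + k) \<le> c \<Longrightarrow> S (Suc k) c x = 1"
      unfolding Seq by (rule stI(3)) (rule FS | assumption)+
    have h4: "\<And>c x y. x \<in> mspace X \<Longrightarrow> y \<in> mspace X \<Longrightarrow> mdist X x y \<le> r
          \<Longrightarrow> \<bar>S (Suc k) c x - S (Suc k) c y\<bar> \<le> 4*e0/dl + 2 * V k + e0"
      unfolding Seq by (rule stI(4)) (rule FS | assumption)+
    have h5: "\<And>c. components_diam_le X r
          {x \<in> mspace X. (2 * real k + 1) * dl + 2*dl \<le> max (wl hb k x) (hb k x) \<and> th \<le> incr (S (Suc k)) c x}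
          (2*(E k + r + rho k/3 + Ef k))"
      unfolding Seq by (rule stI(5)) (rule FS | assumption)+
    have h6: "\<And>x. x \<in> mspace X \<Longrightarrow> S (Suc k) 0 x = 0"
      unfolding Seq by (rule stI(6)) (rule FS | assumption)+
    have c1: "\<forall>c x. x \<in> mspace X \<longrightarrow> 0 \<le> S (Suc k) c x \<and> S (Suc k) c x \<le> 1"
      using h1 by blast
    have c2: "\<forall>c x. x \<in> mspace X \<longrightarrow> S (Suc k) c x \<le> S (Suc k) (Suc c) x"
      using h2 by blast
    have c3: "\<forall>c x. x \<in> mspace X \<longrightarrow> m + Suc k \<le> c \<longrightarrow> S (Suc k) c x = 1"
      using h3 by simp
    have c4: "\<forall>c x y. x \<in> mspace X \<longrightarrow> y \<in> mspace X \<longrightarrow> mdist X x y \<le> r \<longrightarrow> \<bar>S (Suc k) c x - S (Suc k) c y\<bar> \<le> V (Suc k)"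
      using h4 Vs by (meson order_trans)
    have c5: "\<forall>c. components_diam_le X r {x \<in> mspace X. (2 * real (Suc k) + 1) * dl \<le> wl hb (Suc k) x \<and> th \<le> incr (S (Suc k)) c x} (E (Suc k))"
      using h5 unfolding tauS wlS Esuc by simp
    have c6: "\<forall>x. x \<in> mspace X \<longrightarrow> S (Suc k) 0 x = 0"
      using h6 by simp
    show ?case unfolding Inv_def using c1 c2 c3 c4 c5 c6 by blast
  qed
  have IF: "Inv (Suc n)" by (rule InvAll) simp
  define G where "G = S (Suc n)"
  have G3: "\<And>c x. x \<in> mspace X \<Longrightarrow> m + Suc n \<le> c \<Longrightarrow> G c x = 1"
    and G5: "\<And>c. components_diam_le X r {x \<in> mspace X. (2 * real (Suc n) + 1) * dl \<le> wl hb (Suc n) x \<and> th \<le> incr G c x} (E (Suc n))"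
    and G6: "\<And>x. x \<in> mspace X \<Longrightarrow> G 0 x = 0"
    using IF unfolding Inv_def G_def by auto
  have tauF: "(2 * real (Suc n) + 1) * dl = 1" unfolding dl_def by (simp add: field_simps)
  define C where "C i = {x \<in> mspace X. th \<le> incr G (Suc i) x}" for i
  have Ceq: "{x \<in> mspace X. (2 * real (Suc n) + 1) * dl \<le> wl hb (Suc n) x \<and> th \<le> incr G (Suc i) x} = C i" for i
    unfolding C_def tauF using wl_top by auto
  have Ccomp: "components_diam_le X r (C i) (E (Suc n))" for i using G5[of "Suc i"] unfolding Ceq .
  define U where "U i = (\<lambda>x. {y. r_chain X r (C i) x y}) ` C i" for i
  have cover: "\<exists>i\<le>m+n. th \<le> incr G (Suc i) x" if x: "x \<in> mspace X" for x
  proof (rule ccontr)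
    assume na: "\<not> (\<exists>i\<le>m+n. th \<le> incr G (Suc i) x)"
    have lt: "incr G c x < th" if cin: "c \<in> {1..Suc (m+n)}" for c
    proof -
      obtain i where ci: "c = Suc i" "i \<le> m + n" using cin by (cases c) auto
      then have "\<not> th \<le> incr G (Suc i) x" using na by blast
      then show ?thesis using ci by simp
    qed
    have "(\<Sum>c\<in>{1..Suc (m+n)}. incr G c x) < (\<Sum>c\<in>{1..Suc (m+n)}. th)"
      by (rule sum_strict_mono) (use lt in auto)
    also have "\<dots> = (real (m+n) + 1) * th" by simp
    also have "\<dots> = 1" unfolding th_def by simp
    finally have "(\<Sum>c\<in>{1..Suc (m+n)}. incr G c x) < 1" .
    moreover have "(\<Sum>c\<in>{1..Suc (m+n)}. incr G c x) = G (Suc (m+n)) x - G 0 x" by (rule sum_incr)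
    moreover have "G (Suc (m+n)) x = 1" using G3[OF x] by simp
    moreover have "G 0 x = 0" using G6[OF x] .
    ultimately show False by simp
  qed
  have CX: "C i \<subseteq> mspace X" for i unfolding C_def by blast
  have P1: "r_disjoint X r (U i)" for i
    unfolding r_disjoint_def
  proof (intro ballI impI)
    fix A B p q assume A: "A \<in> U i" and B: "B \<in> U i" and ne: "A \<noteq> B" and p: "p \<in> A" and q: "q \<in> B"
    obtain x1 where x1: "x1 \<in> C i" "A = {y. r_chain X r (C i) x1 y}" using A unfolding U_def by blast
    obtain x2 where x2: "x2 \<in> C i" "B = {y. r_chain X r (C i) x2 y}" using B unfolding U_def by blast
    have c1: "r_chain X r (C i) x1 p" using p x1 by simp
    have c2: "r_chain X r (C i) x2 q" using q x2 by simp
    show "r \<le> mdist X p q"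
    proof (rule ccontr)
      assume "\<not> r \<le> mdist X p q"
      then have d: "mdist X p q \<le> r" by simp
      have qC: "q \<in> C i" using r_chain_mem[OF c2] by blast
      have c3: "r_chain X r (C i) x1 q" by (rule r_chain_step[OF c1 qC d])
      have c4: "r_chain X r (C i) x1 x2" by (rule r_chain_trans[OF c3 r_chain_sym[OF c2]])
      have c5: "r_chain X r (C i) x2 x1" by (rule r_chain_sym[OF c4])
      have "r_chain X r (C i) x1 y \<longleftrightarrow> r_chain X r (C i) x2 y" for y
        using r_chain_trans[OF c4, of y] r_chain_trans[OF c5, of y] by blast
      then have "A = B" using x1(2) x2(2) by simp
      then show False using ne by simp
    qed
  qed
  have P2: "A \<subseteq> mspace X" if A: "A \<in> U i" for i A
  proof -
    obtain x1 where x1: "x1 \<in> C i" "A = {y. r_chain X r (C i) x1 y}" using A unfolding U_def by blast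
    show ?thesis
    proof
      fix y assume "y \<in> A"
      then have ch: "r_chain X r (C i) x1 y" using x1 by simp
      have "y \<in> C i" using r_chain_mem[OF ch] by blast
      then show "y \<in> mspace X" using CX by blast
    qed
  qed
  have P3: "diam_le X A (Eseq e0 aF bF cF Dtf (Suc n) r)" if A: "A \<in> U i" for i A
    unfolding diam_le_def
  proof (intro ballI)
    obtain x1 where x1: "x1 \<in> C i" "A = {y. r_chain X r (C i) x1 y}" using A unfolding U_def by blast
    fix p q assume "p \<in> A" "q \<in> A"
    then have c1: "r_chain X r (C i) x1 p" and c2: "r_chain X r (C i) x1 q" using x1 by auto
    have ch: "r_chain X r (C i) p q" by (rule r_chain_trans[OF r_chain_sym[OF c1] c2])
    show "mdist X p q \<le> Eseq e0 aF bF cF Dtf (Suc n) r" using comp_diam[OF Ccomp ch] unfolding E_def by simp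
  qed
  have P4: "mspace X \<subseteq> (\<Union>i\<le>m+n. \<Union>(U i))"
  proof
    fix x assume x: "x \<in> mspace X"
    obtain i where i: "i \<le> m+n" "th \<le> incr G (Suc i) x" using cover[OF x] by blast
    have xC: "x \<in> C i" unfolding C_def using x i by simp
    have "x \<in> {y. r_chain X r (C i) x y}" using r_chain_refl[OF xC] by simp
    moreover have "{y. r_chain X r (C i) x y} \<in> U i" unfolding U_def using xC by blast
    ultimately show "x \<in> (\<Union>i\<le>m+n. \<Union>(U i))" using i by blast
  qed
  show ?thesis using P1 P2 P3 P4 by blast
qed

lemma enat_Inf_mem: "(A::enat set) \<noteq> {} \<Longrightarrow> Inf A \<in> A"
  unfolding Inf_enat_def by (auto intro: LeastI)

theorem mainTheorem5:
  fixes X :: "'a metric" and Y :: "'b metric" and f :: "'a \<Rightarrow> 'b"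
  assumes "asymp_lipschitz X Y f"
  shows "asdimAN X \<le> fun_asdimAN X Y f + asdimAN Y"
proof (cases "{enat m | m. fun_asdimAN_le X Y f m} = {} \<or> {enat n | n. asdimAN_le Y n} = {}")
  case True
  then have "fun_asdimAN X Y f = \<infinity> \<or> asdimAN Y = \<infinity>"
    unfolding fun_asdimAN_def asdimAN_def by (auto simp: Inf_enat_def)
  then show ?thesis by auto
next
  case False
  then have ne1: "{enat m | m. fun_asdimAN_le X Y f m} \<noteq> {}" and ne2: "{enat n | n. asdimAN_le Y n} \<noteq> {}" by auto
  obtain m where m: "fun_asdimAN X Y f = enat m" "fun_asdimAN_le X Y f m"
    using enat_Inf_mem[OF ne1] unfolding fun_asdimAN_def by auto
  obtain n where n: "asdimAN Y = enat n" "asdimAN_le Y n"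
    using enat_Inf_mem[OF ne2] unfolding asdimAN_def by auto
  have fXY: "f ` mspace X \<subseteq> mspace Y" using assms unfolding asymp_lipschitz_def by blast
  obtain aL bL where aL: "0 \<le> aL" and bL: "0 \<le> bL"
    and lip0: "\<forall>x\<in>mspace X. \<forall>y\<in>mspace X. mdist Y (f x) (f y) \<le> aL * mdist X x y + bL"
    using assms unfolding asymp_lipschitz_def by blast
  have lip: "\<And>x y. x \<in> mspace X \<Longrightarrow> y \<in> mspace X \<Longrightarrow> mdist Y (f x) (f y) \<le> aL * mdist X x y + bL"
    using lip0 by blast
  obtain bY cY where bY: "0 \<le> bY" and cY: "0 \<le> cY" and ctlY: "control_fun Y n (\<lambda>r. cY * r + bY)"
    using n(2) unfolding asdimAN_le_def by blast
  obtain aF bF cF where aF: "0 \<le> aF" and bF: "0 \<le> bF" and cF: "0 \<le> cF"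
    and ctlf: "fun_control_fun X Y f m (\<lambda>r R. aF * r + bF * R + cF)"
    using m(2) unfolding fun_asdimAN_le_def by blast
  define e0 where "e0 = (1 / (real (m + n) + 1)) * (1 / (2 * real n + 3)) / (20 * 2 ^ n)"
  define Rf where "Rf = (\<lambda>r::real. 3 * (aL * r + bL) / e0 + r)"
  define Dtf where "Dtf = (\<lambda>r. cY * Rf r + bY + 2 * Rf r / 3)"
  have e00: "0 < e0" unfolding e0_def by simp
  have affD: "aff Dtf"
    unfolding aff_def
  proof (intro exI conjI allI)
    show "0 \<le> cY * (3 * aL / e0 + 1) + 2 * (3 * aL / e0 + 1) / 3" using cY aL e00 by simp
    show "0 \<le> cY * (3 * bL / e0) + bY + 2 * (3 * bL / e0) / 3" using cY bL bY e00 by simp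
    fix r
    show "Dtf r = (cY * (3 * aL / e0 + 1) + 2 * (3 * aL / e0 + 1) / 3) * r + (cY * (3 * bL / e0) + bY + 2 * (3 * bL / e0) / 3)"
      unfolding Dtf_def Rf_def using e00 by (simp add: field_simps)
  qed
  obtain p q where pq: "0 \<le> p" "0 \<le> q" "\<And>r. Eseq e0 aF bF cF Dtf (Suc n) r = p * r + q"
    using Eseq_aff[OF e00 aF bF cF affD, of "Suc n"] unfolding aff_def by blast
  have "control_fun X (m + n) (\<lambda>r. p * r + q)"
    unfolding control_fun_def
  proof (intro allI impI)
    fix r :: real assume r: "0 < r"
    show "\<exists>U. (\<forall>i\<le>m + n. r_disjoint X r (U i) \<and> (\<forall>A\<in>U i. A \<subseteq> mspace X \<and> diam_le X A (p * r + q))) \<and>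
             mspace X \<subseteq> (\<Union>i\<le>m + n. \<Union> (U i))"
      using construction[OF fXY aL bL lip cY bY ctlY aF bF cF ctlf e0_def Rf_def Dtf_def r]
      unfolding pq(3) .
  qed
  then have "asdimAN_le X (m + n)" unfolding asdimAN_le_def using pq by blast
  then have "asdimAN X \<le> enat (m + n)" unfolding asdimAN_def by (auto intro: Inf_lower)
  then show ?thesis using m(1) n(1) by simp
qed

end
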